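(* Let $S$ be a (small) category. Then $S$ is a left gcd-category (resp., a right gcd-category, resp., a gcd-category) if and only if its universal monoid $\mathrm{U_{mon}}(S)$ is a left gcd-monoid (resp., a right gcd-monoid, resp., a gcd-monoid).
   Context: Categories are viewed "arrow-only": a category is a set $S$ with a partial associative multiplication in which every arrow $x$ has a source identity $\mathrm{s}(x)$ and a target identity $\mathrm{t}(x)$ with $x=\mathrm{s}(x)x=x\,\mathrm{t}(x)$, and $xy$ is defined iff $\mathrm{t}(x)=\mathrm{s}(y)$; $\mathrm{Id}\,S$ denotes the set of identities. The universal monoid $\mathrm{U_{mon}}(S)$ is the monoid presented by generators $\varepsilon_S(x)$, $x\in S$, and relations $\varepsilon_S(e)=1$ for $e\in\mathrm{Id}\,S$ and $\varepsilon_S(x)\varepsilon_S(y)=\varepsilon_S(xy)$ whenever $xy$ is defined; $\varepsilon_S:S\to\mathrm{U_{mon}}(S)$ is the canonical functor (it is initial among functors from $S$ to monoids). A category $S$ is conical if $xy\in\mathrm{Id}\,S$ implies $x\in\mathrm{Id}\,S$. Left divisibility: $a\leqslant b$ iff $b=ax$ for some $x\in S$; right divisibility: $a\mathbin{\widetilde\leqslant} b$ iff $b=xa$ for some $x$. A left gcd of a set is a greatest lower bound for $\leqslant$, a right gcd a greatest lower bound for $\mathbin{\widetilde\leqslant}$. $S$ is a left gcd-category if it is conical, left cancellative ($ax=ay\Rightarrow x=y$), and any $a,b\in S$ with $\mathrm{s}(a)=\mathrm{s}(b)$ have a left gcd; right gcd-categories are defined dually (right cancellative, any $a,b$ with $\mathrm{t}(a)=\mathrm{t}(b)$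 have a right gcd); a gcd-category is both. When $S$ is a monoid (a category with one identity $1$) these are called left gcd-monoid, right gcd-monoid, gcd-monoid. *)

theory Defs
  imports Main
begin

text \<open>Small categories, arrow-only: a carrier set of arrows, source and target
  maps (whose values are the identities), and a composition that is meaningful
  exactly when the target of the first arrow equals the source of the second.
  Composition is written left to right: comp x y is "xy".\<close>

record 'a cat =
  arr  :: "'a set"
  src  :: "'a \<Rightarrow> 'a"
  tgt  :: "'a \<Rightarrow> 'a"
  comp :: "'a \<Rightarrow> 'a \<Rightarrow> 'a"

definition defined :: "('a, 'b) cat_scheme \<Rightarrow> 'a \<Rightarrow> 'a \<Rightarrow> bool" where
  "defined C x y \<longleftrightarrow> x \<in> arr C \<and> y \<in> arr C \<and> tgt C x = src C y"

definition Ids :: "('a, 'b) cat_scheme \<Rightarrow> 'a set" where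
  "Ids C = {x \<in> arr C. src C x = x}"

definition category :: "('a, 'b) cat_scheme \<Rightarrow> bool" where
  "category C \<longleftrightarrow>
     (\<forall>x \<in> arr C. src C x \<in> arr C \<and> tgt C x \<in> arr C
        \<and> src C (src C x) = src C x \<and> tgt C (src C x) = src C x
        \<and> src C (tgt C x) = tgt C x \<and> tgt C (tgt C x) = tgt C x
        \<and> comp C (src C x) x = x \<and> comp C x (tgt C x) = x)
   \<and> (\<forall>x y. defined C x y \<longrightarrow> comp C x y \<in> arr C
        \<and> src C (comp C x y) = src C x \<and> tgt C (comp C x y) = tgt C y)
   \<and> (\<forall>x y z. defined C x y \<and> defined C y z \<longrightarrow>
        comp C (comp C x y) z = comp C x (comp C y z))"

inductive umon_rel :: "('a, 'b) cat_scheme \<Rightarrow> 'a list \<Rightarrow> 'a list \<Rightarrow> bool"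
  for C where
  refl: "u \<in> lists (arr C) \<Longrightarrow> umon_rel C u u"
| sym: "umon_rel C u v \<Longrightarrow> umon_rel C v u"
| trans: "umon_rel C u v \<Longrightarrow> umon_rel C v w \<Longrightarrow> umon_rel C u w"
| ctxt: "umon_rel C u v \<Longrightarrow> w1 \<in> lists (arr C) \<Longrightarrow> w2 \<in> lists (arr C) \<Longrightarrow>
         umon_rel C (w1 @ u @ w2) (w1 @ v @ w2)"
| ident: "e \<in> Ids C \<Longrightarrow> umon_rel C [e] []"
| compose: "defined C x y \<Longrightarrow> umon_rel C [x, y] [comp C x y]"

definition umon_class :: "('a, 'b) cat_scheme \<Rightarrow> 'a list \<Rightarrow> 'a list set" where
  "umon_class C u = {v. umon_rel C u v}"

definition umon_carrier :: "('a, 'b) cat_scheme \<Rightarrow> 'a list set set" where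
  "umon_carrier C = umon_class C ` lists (arr C)"

definition umon_one :: "('a, 'b) cat_scheme \<Rightarrow> 'a list set" where
  "umon_one C = umon_class C []"

definition umon_mult :: "('a, 'b) cat_scheme \<Rightarrow> 'a list set \<Rightarrow> 'a list set \<Rightarrow> 'a list set" where
  "umon_mult C X Y = umon_class C ((SOME u. u \<in> X) @ (SOME v. v \<in> Y))"

text \<open>The universal monoid U_mon(S), viewed as a one-object category
  (its only identity is the class of the empty word).\<close>

definition Umon :: "('a, 'b) cat_scheme \<Rightarrow> 'a list set cat" where
  "Umon C = \<lparr> arr = umon_carrier C, src = (\<lambda>_. umon_one C), tgt = (\<lambda>_. umon_one C),
              comp = umon_mult C \<rparr>"

definition ldiv :: "('a, 'b) cat_scheme \<Rightarrow> 'a \<Rightarrow> 'a \<Rightarrow> bool" where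
  "ldiv C a b \<longleftrightarrow> (\<exists>x. defined C a x \<and> b = comp C a x)"

definition rdiv :: "('a, 'b) cat_scheme \<Rightarrow> 'a \<Rightarrow> 'a \<Rightarrow> bool" where
  "rdiv C a b \<longleftrightarrow> (\<exists>x. defined C x a \<and> b = comp C x a)"

definition is_left_gcd :: "('a, 'b) cat_scheme \<Rightarrow> 'a \<Rightarrow> 'a \<Rightarrow> 'a \<Rightarrow> bool" where
  "is_left_gcd C a b c \<longleftrightarrow> ldiv C c a \<and> ldiv C c b \<and>
     (\<forall>d. ldiv C d a \<and> ldiv C d b \<longrightarrow> ldiv C d c)"

definition is_right_gcd :: "('a, 'b) cat_scheme \<Rightarrow> 'a \<Rightarrow> 'a \<Rightarrow> 'a \<Rightarrow> bool" where
  "is_right_gcd C a b c \<longleftrightarrow> rdiv C c a \<and> rdiv C c b \<and>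
     (\<forall>d. rdiv C d a \<and> rdiv C d b \<longrightarrow> rdiv C d c)"

definition conical :: "('a, 'b) cat_scheme \<Rightarrow> bool" where
  "conical C \<longleftrightarrow> (\<forall>x y. defined C x y \<and> comp C x y \<in> Ids C \<longrightarrow> x \<in> Ids C)"

definition left_cancellative :: "('a, 'b) cat_scheme \<Rightarrow> bool" where
  "left_cancellative C \<longleftrightarrow>
     (\<forall>a x y. defined C a x \<and> defined C a y \<and> comp C a x = comp C a y \<longrightarrow> x = y)"

definition right_cancellative :: "('a, 'b) cat_scheme \<Rightarrow> bool" where
  "right_cancellative C \<longleftrightarrow>
     (\<forall>a x y. defined C x a \<and> defined C y a \<and> comp C x a = comp C y a \<longrightarrow> x = y)"

definition left_gcd_cat :: "('a, 'b) cat_scheme \<Rightarrow> bool" where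
  "left_gcd_cat C \<longleftrightarrow> conical C \<and> left_cancellative C \<and>
     (\<forall>a \<in> arr C. \<forall>b \<in> arr C. src C a = src C b \<longrightarrow> (\<exists>c. is_left_gcd C a b c))"

definition right_gcd_cat :: "('a, 'b) cat_scheme \<Rightarrow> bool" where
  "right_gcd_cat C \<longleftrightarrow> conical C \<and> right_cancellative C \<and>
     (\<forall>a \<in> arr C. \<forall>b \<in> arr C. tgt C a = tgt C b \<longrightarrow> (\<exists>c. is_right_gcd C a b c))"

definition gcd_cat :: "('a, 'b) cat_scheme \<Rightarrow> bool" where
  "gcd_cat C \<longleftrightarrow> left_gcd_cat C \<and> right_gcd_cat C"

end

theory Submission
  imports Defs
begin

lemma catD:
  assumes "category S"
  shows "x \<in> arr S \<Longrightarrow> src S x \<in> arr S" "x \<in> arr S \<Longrightarrow> tgt S x \<in> arr S"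
    "x \<in> arr S \<Longrightarrow> src S (src S x) = src S x" "x \<in> arr S \<Longrightarrow> tgt S (src S x) = src S x"
    "x \<in> arr S \<Longrightarrow> src S (tgt S x) = tgt S x" "x \<in> arr S \<Longrightarrow> tgt S (tgt S x) = tgt S x"
    "x \<in> arr S \<Longrightarrow> comp S (src S x) x = x" "x \<in> arr S \<Longrightarrow> comp S x (tgt S x) = x"
    "defined S x y \<Longrightarrow> comp S x y \<in> arr S"
    "defined S x y \<Longrightarrow> src S (comp S x y) = src S x"
    "defined S x y \<Longrightarrow> tgt S (comp S x y) = tgt S y"
    "defined S x y \<Longrightarrow> defined S y z \<Longrightarrow> comp S (comp S x y) z = comp S x (comp S y z)"
  using assms unfolding category_def by (meson, meson, meson, meson, meson, meson, meson, meson, meson, meson, meson, meson)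

lemma Ids_tgt: "category S \<Longrightarrow> e \<in> Ids S \<Longrightarrow> tgt S e = e"
proof -
  assume S: "category S" and e: "e \<in> Ids S"
  have "e \<in> arr S" "src S e = e" using e unfolding Ids_def by auto
  then show ?thesis using catD(4)[OF S, of e] by simp
qed

lemma Ids_arr: "e \<in> Ids S \<Longrightarrow> e \<in> arr S" unfolding Ids_def by auto

lemma Ids_compL: "category S \<Longrightarrow> e \<in> Ids S \<Longrightarrow> defined S e y \<Longrightarrow> comp S e y = y"
proof -
  assume S: "category S" and e: "e \<in> Ids S" and d: "defined S e y"
  have "e = src S y" using Ids_tgt[OF S e] d unfolding defined_def by simp
  then show ?thesis using catD(7)[OF S, of y] d unfolding defined_def by simp
qed

lemma Ids_compR: "category S \<Longrightarrow> e \<in> Ids S \<Longrightarrow> defined S x e \<Longrightarrow> comp S x e = x"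
proof -
  assume S: "category S" and e: "e \<in> Ids S" and d: "defined S x e"
  have "e = tgt S x" using e d unfolding defined_def Ids_def by simp
  then show ?thesis using catD(8)[OF S, of x] d unfolding defined_def by simp
qed

lemma src_Ids: "category S \<Longrightarrow> x \<in> arr S \<Longrightarrow> src S x \<in> Ids S"
  unfolding Ids_def using catD(1,3)[of S x] by simp
lemma tgt_Ids: "category S \<Longrightarrow> x \<in> arr S \<Longrightarrow> tgt S x \<in> Ids S"
  unfolding Ids_def using catD(2,5)[of S x] by simp

definition cns :: "('a,'b) cat_scheme \<Rightarrow> 'a \<Rightarrow> 'a list \<Rightarrow> 'a list" where
"cns C a L = (if a \<in> Ids C then L else (case L of [] \<Rightarrow> [a] | b # r \<Rightarrow>
   if tgt C a = src C b then (if comp C a b \<in> Ids C then r else comp C a b # r) else a # L))"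

fun normal :: "('a,'b) cat_scheme \<Rightarrow> 'a list \<Rightarrow> bool" where
  "normal C [] = True"
| "normal C [a] = (a \<in> arr C \<and> a \<notin> Ids C)"
| "normal C (a # b # r) = (a \<in> arr C \<and> a \<notin> Ids C \<and> tgt C a \<noteq> src C b \<and> normal C (b # r))"

lemma normal_Cons: "normal C (a # l) \<longleftrightarrow> a \<in> arr C \<and> a \<notin> Ids C \<and> (l \<noteq> [] \<longrightarrow> tgt C a \<noteq> src C (hd l)) \<and> normal C l"
  by (cases l) auto

lemma normal_lists: "normal C p \<Longrightarrow> p \<in> lists (arr C)"
  by (induction p) (auto simp: normal_Cons)

definition nf :: "('a,'b) cat_scheme \<Rightarrow> 'a list \<Rightarrow> 'a list" where
  "nf C u = foldr (cns C) u []"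

definition nmul :: "('a,'b) cat_scheme \<Rightarrow> 'a list \<Rightarrow> 'a list \<Rightarrow> 'a list" where
  "nmul C p q = foldr (cns C) p q"

lemma cns_normal:
  assumes "category S" "a \<in> arr S" "normal S L"
  shows "normal S (cns S a L)"
proof (cases L)
  case Nil then show ?thesis using assms by (auto simp: cns_def)
next
  case (Cons b r)
  have b: "b \<in> arr S" "normal S r" "r \<noteq> [] \<longrightarrow> tgt S b \<noteq> src S (hd r)" using assms Cons by (auto simp: normal_Cons)
  show ?thesis
  proof (cases "a \<in> Ids S")
    case True then show ?thesis using assms by (simp add: cns_def)
  next
    case False
    show ?thesis
    proof (cases "tgt S a = src S b")
      case True
      hence d: "defined S a b" using assms b by (auto simp: defined_def)
      show ?thesis using False True b catD(9,11)[OF assms(1) d] d Cons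
        by (auto simp: cns_def normal_Cons)
    next
      case F2: False
      show ?thesis using False F2 assms Cons by (auto simp: cns_def normal_Cons)
    qed
  qed
qed

lemma cns_normal_self: "normal S (a # p) \<Longrightarrow> cns S a p = a # p"
  by (cases p) (auto simp: cns_def)

lemma foldr_normal: "category S \<Longrightarrow> u \<in> lists (arr S) \<Longrightarrow> normal S L \<Longrightarrow> normal S (foldr (cns S) u L)"
  by (induction u) (auto intro: cns_normal)

lemma nf_normal: "category S \<Longrightarrow> u \<in> lists (arr S) \<Longrightarrow> normal S (nf S u)"
  unfolding nf_def by (rule foldr_normal) auto

lemma nf_id: "normal S p \<Longrightarrow> nf S p = p"
proof (induction p)
  case Nil then show ?case by (simp add: nf_def)
next
  case (Cons a p)
  hence "nf S p = p" by (simp add: normal_Cons)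
  then show ?case using Cons.prems by (simp add: nf_def cns_normal_self)
qed

lemma cns_comp:
  assumes S: "category S" and d: "defined S a b" and M: "normal S M"
  shows "cns S a (cns S b M) = cns S (comp S a b) M"
proof -
  note c = catD[OF S]
  have ab: "a \<in> arr S" "b \<in> arr S" "tgt S a = src S b" using d by (auto simp: defined_def)
  show ?thesis
  proof (cases "b \<in> Ids S")
    case True
    then show ?thesis using Ids_compR[OF S True d] by (simp add: cns_def)
  next
    case bN: False
    show ?thesis
    proof (cases "a \<in> Ids S")
      case True
      then show ?thesis using Ids_compL[OF S True d] bN by (simp add: cns_def)
    next
      case aN: False
      show ?thesis
      proof (cases M)
        case Nil
        then show ?thesis using aN bN ab c(11)[OF d] by (simp add: cns_def)
      next
        case (Cons x r)
        have x: "x \<in> arr S" "x \<notin> Ids S" "normal S r" "r \<noteq> [] \<longrightarrow> tgt S x \<noteq> src S (hd r)"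
          using M Cons by (auto simp: normal_Cons)
        show ?thesis
        proof (cases "tgt S b = src S x")
          case True
          hence dbx: "defined S b x" using ab x by (simp add: defined_def)
          have as: "comp S (comp S a b) x = comp S a (comp S b x)" using c(12)[OF d dbx] .
          have tab: "tgt S (comp S a b) = src S x" using c(11)[OF d] True by simp
          show ?thesis
          proof (cases "comp S b x \<in> Ids S")
            case True
            have dd: "defined S a (comp S b x)" using ab c(9)[OF dbx] c(10)[OF dbx] by (simp add: defined_def)
            have "comp S (comp S a b) x = a" using as Ids_compR[OF S True dd] by simp
            moreover have "r \<noteq> [] \<longrightarrow> tgt S a \<noteq> src S (hd r)"
            proof -
              have "tgt S a = tgt S (comp S (comp S a b) x)" using \<open>comp S (comp S a b) x = a\<close> by simp
              also have "\<dots> = tgt S x" using c(11) tab c(9)[OF d] x(1) by (simp add: defined_def)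
              finally show ?thesis using x(4) by simp
            qed
            ultimately have r1: "cns S a r = a # r" using aN ab(1) x(3)
              by (cases r) (auto simp: cns_def)
            have L: "cns S a (cns S b M) = a # r" using True bN Cons \<open>tgt S b = src S x\<close> r1
              by (simp add: cns_def)
            have R: "cns S (comp S a b) M = a # r"
            proof (cases "comp S a b \<in> Ids S")
              case True
              have "comp S (comp S a b) x = x" using Ids_compL[OF S True] tab c(9)[OF d] x(1)
                by (simp add: defined_def)
              then show ?thesis using True Cons \<open>comp S (comp S a b) x = a\<close> by (simp add: cns_def)
            next
              case False
              then show ?thesis using Cons tab \<open>comp S (comp S a b) x = a\<close> aN by (simp add: cns_def)
            qed
            show ?thesis using L R by simp
          next
            case False
            have dabx: "defined S a (comp S b x)" using ab c(9)[OF dbx] c(10)[OF dbx] by (simp add: defined_def)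
            show ?thesis
            proof (cases "comp S a b \<in> Ids S")
              case True
              have "comp S a (comp S b x) = x" using as Ids_compL[OF S True] tab c(9)[OF d] x(1)
                by (simp add: defined_def)
              then show ?thesis using True False aN bN ab Cons dabx x
                by (simp add: cns_def defined_def c(10)[OF dbx])
            next
              case F2: False
              then show ?thesis using False aN bN ab Cons dabx x tab as \<open>tgt S b = src S x\<close>
                by (simp add: cns_def defined_def c(10)[OF dbx])
            qed
          qed
        next
          case False
          then show ?thesis using aN bN ab Cons c(11)[OF d] by (simp add: cns_def)
        qed
      qed
    qed
  qed
qed


lemma foldr_cns_cns:
  assumes S: "category S" and a: "a \<in> arr S" and p: "normal S p" and L: "normal S L"
  shows "foldr (cns S) (cns S a p) L = cns S a (foldr (cns S) p L)"
proof (cases "a \<in> Ids S")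
  case True then show ?thesis by (simp add: cns_def)
next
  case aN: False
  show ?thesis
  proof (cases p)
    case Nil then show ?thesis using aN by (simp add: cns_def)
  next
    case (Cons b r)
    have b: "b \<in> arr S" "normal S r" using p Cons by (auto simp: normal_Cons)
    have M: "normal S (foldr (cns S) r L)" using foldr_normal[OF S normal_lists[OF b(2)] L] .
    show ?thesis
    proof (cases "tgt S a = src S b")
      case True
      hence d: "defined S a b" using a b by (simp add: defined_def)
      have e: "cns S a (cns S b (foldr (cns S) r L)) = cns S (comp S a b) (foldr (cns S) r L)"
        using cns_comp[OF S d M] .
      show ?thesis
      proof (cases "comp S a b \<in> Ids S")
        case True
        then show ?thesis using e aN Cons \<open>tgt S a = src S b\<close> by (simp add: cns_def)
      next
        case False
        then show ?thesis using e aN Cons \<open>tgt S a = src S b\<close> by (simp add: cns_def)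
      qed
    next
      case False
      then show ?thesis using aN Cons by (simp add: cns_def)
    qed
  qed
qed

lemma foldr_nf:
  assumes S: "category S" and u: "u \<in> lists (arr S)" and L: "normal S L"
  shows "foldr (cns S) u L = foldr (cns S) (nf S u) L"
  using u
proof (induction u)
  case Nil then show ?case by (simp add: nf_def)
next
  case (Cons a u)
  have "foldr (cns S) (a # u) L = cns S a (foldr (cns S) (nf S u) L)" using Cons by simp
  also have "\<dots> = foldr (cns S) (cns S a (nf S u)) L"
  proof -
    have a: "a \<in> arr S" "u \<in> lists (arr S)" using Cons by auto
    show ?thesis using foldr_cns_cns[OF S a(1) nf_normal[OF S a(2)] L] by simp
  qed
  also have "cns S a (nf S u) = nf S (a # u)" by (simp add: nf_def)
  finally show ?case .
qed

lemma umon_rel_lists: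
  assumes S: "category S"
  shows "umon_rel S u v \<Longrightarrow> u \<in> lists (arr S) \<and> v \<in> lists (arr S)"
proof (induction rule: umon_rel.induct)
  case (ident e) then show ?case using Ids_arr by auto
next
  case (compose x y) then show ?case using catD(9)[OF S compose] by (auto simp: defined_def)
qed auto

lemma umon_rel_nf:
  assumes S: "category S"
  shows "umon_rel S u v \<Longrightarrow> nf S u = nf S v"
proof (induction rule: umon_rel.induct)
  case (ctxt u v w1 w2)
  have uv: "u \<in> lists (arr S)" "v \<in> lists (arr S)" using umon_rel_lists[OF S ctxt.hyps(1)] by auto
  have n2: "normal S (nf S w2)" using nf_normal[OF S ctxt.hyps(3)] .
  have "nf S (w1 @ u @ w2) = foldr (cns S) w1 (foldr (cns S) u (nf S w2))" by (simp add: nf_def)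
  also have "foldr (cns S) u (nf S w2) = foldr (cns S) (nf S u) (nf S w2)" using foldr_nf[OF S uv(1) n2] .
  also have "\<dots> = foldr (cns S) (nf S v) (nf S w2)" using ctxt.IH by simp
  also have "\<dots> = foldr (cns S) v (nf S w2)" using foldr_nf[OF S uv(2) n2] by simp
  finally show ?case by (simp add: nf_def)
next
  case (ident e) then show ?case by (simp add: nf_def cns_def)
next
  case (compose x y)
  have "nf S [x, y] = cns S x (cns S y [])" by (simp add: nf_def)
  also have "\<dots> = cns S (comp S x y) []" using cns_comp[OF S compose] by simp
  finally show ?case by (simp add: nf_def)
qed auto

lemma rel_cns:
  assumes S: "category S" and a: "a \<in> arr S" and p: "normal S p"
  shows "umon_rel S (a # p) (cns S a p)"
proof -
  have pl: "p \<in> lists (arr S)" using normal_lists[OF p] .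
  show ?thesis
  proof (cases "a \<in> Ids S")
    case True
    have "umon_rel S ([] @ [a] @ p) ([] @ [] @ p)"
      by (rule umon_rel.ctxt[OF umon_rel.ident[OF True]]) (use pl in auto)
    then show ?thesis using True by (simp add: cns_def)
  next
    case aN: False
    show ?thesis
    proof (cases p)
      case Nil then show ?thesis using aN a by (simp add: cns_def umon_rel.refl)
    next
      case (Cons b r)
      have b: "b \<in> arr S" "r \<in> lists (arr S)" using pl Cons by auto
      show ?thesis
      proof (cases "tgt S a = src S b")
        case True
        hence d: "defined S a b" using a b by (simp add: defined_def)
        have 1: "umon_rel S ([] @ [a, b] @ r) ([] @ [comp S a b] @ r)"
          by (rule umon_rel.ctxt[OF umon_rel.compose[OF d]]) (use b in auto)
        show ?thesis
        proof (cases "comp S a b \<in> Ids S")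
          case True
          have 2: "umon_rel S ([] @ [comp S a b] @ r) ([] @ [] @ r)"
            by (rule umon_rel.ctxt[OF umon_rel.ident[OF True]]) (use b in auto)
          show ?thesis using umon_rel.trans[OF 1 2] True aN Cons \<open>tgt S a = src S b\<close>
            by (simp add: cns_def)
        next
          case False
          then show ?thesis using 1 aN Cons \<open>tgt S a = src S b\<close> by (simp add: cns_def)
        qed
      next
        case False
        then show ?thesis using aN Cons a pl by (simp add: cns_def umon_rel.refl)
      qed
    qed
  qed
qed

lemma rel_nf:
  assumes S: "category S"
  shows "u \<in> lists (arr S) \<Longrightarrow> umon_rel S u (nf S u)"
proof (induction u)
  case Nil then show ?case by (simp add: nf_def umon_rel.refl)
next
  case (Cons a u)
  have 1: "umon_rel S ([a] @ u @ []) ([a] @ nf S u @ [])"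
    by (rule umon_rel.ctxt) (use Cons in auto)
  have 2: "umon_rel S (a # nf S u) (cns S a (nf S u))"
    using rel_cns[OF S _ nf_normal[OF S]] Cons.prems by auto
  show ?case using umon_rel.trans[OF _ 2] 1 by (simp add: nf_def)
qed

lemma umon_rel_iff:
  assumes S: "category S" and "u \<in> lists (arr S)" "v \<in> lists (arr S)"
  shows "umon_rel S u v \<longleftrightarrow> nf S u = nf S v"
proof
  assume "nf S u = nf S v"
  then have "umon_rel S (nf S u) v" using umon_rel.sym[OF rel_nf[OF S assms(3)]] by simp
  then show "umon_rel S u v"
    using umon_rel.trans[OF rel_nf[OF S assms(2)]] by blast
qed (rule umon_rel_nf[OF S])

lemma cls_mem:
  assumes S: "category S" and u: "u \<in> lists (arr S)"
  shows "v \<in> umon_class S u \<longleftrightarrow> v \<in> lists (arr S) \<and> nf S v = nf S u"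
proof
  assume "v \<in> umon_class S u"
  then have r: "umon_rel S u v" unfolding umon_class_def by simp
  then have "v \<in> lists (arr S)" using umon_rel_lists[OF S r] by simp
  then show "v \<in> lists (arr S) \<and> nf S v = nf S u" using umon_rel_nf[OF S r] by simp
next
  assume "v \<in> lists (arr S) \<and> nf S v = nf S u"
  then show "v \<in> umon_class S u" unfolding umon_class_def using umon_rel_iff[OF S u, of v] by simp
qed

lemma cls_eq:
  assumes S: "category S" and u: "u \<in> lists (arr S)" and v: "v \<in> lists (arr S)"
  shows "umon_class S u = umon_class S v \<longleftrightarrow> nf S u = nf S v"
proof
  assume "umon_class S u = umon_class S v"
  then have "u \<in> umon_class S v" using cls_mem[OF S u, of u] u by auto
  then show "nf S u = nf S v" using cls_mem[OF S v] by auto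
next
  assume "nf S u = nf S v"
  then show "umon_class S u = umon_class S v" using cls_mem[OF S u] cls_mem[OF S v] by auto
qed

lemma nf_append:
  assumes S: "category S" and u: "u \<in> lists (arr S)" and v: "v \<in> lists (arr S)"
  shows "nf S (u @ v) = nmul S (nf S u) (nf S v)"
proof -
  have "nf S (u @ v) = foldr (cns S) u (nf S v)" by (simp add: nf_def)
  also have "\<dots> = foldr (cns S) (nf S u) (nf S v)" using foldr_nf[OF S u nf_normal[OF S v]] .
  finally show ?thesis by (simp add: nmul_def)
qed

lemma umon_mult_cls:
  assumes S: "category S" and u: "u \<in> lists (arr S)" and v: "v \<in> lists (arr S)"
  shows "umon_mult S (umon_class S u) (umon_class S v) = umon_class S (u @ v)"
proof -
  define u' where "u' = (SOME w. w \<in> umon_class S u)"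
  define v' where "v' = (SOME w. w \<in> umon_class S v)"
  have "u \<in> umon_class S u" using cls_mem[OF S u] u by auto
  hence u': "u' \<in> umon_class S u" unfolding u'_def by (rule someI)
  have "v \<in> umon_class S v" using cls_mem[OF S v] v by auto
  hence v': "v' \<in> umon_class S v" unfolding v'_def by (rule someI)
  have u'': "u' \<in> lists (arr S)" "nf S u' = nf S u" using u' cls_mem[OF S u] by auto
  have v'': "v' \<in> lists (arr S)" "nf S v' = nf S v" using v' cls_mem[OF S v] by auto
  have "umon_mult S (umon_class S u) (umon_class S v) = umon_class S (u' @ v')"
    unfolding umon_mult_def u'_def v'_def by simp
  also have "\<dots> = umon_class S (u @ v)"
    using cls_eq[OF S] u v u'' v'' nf_append[OF S] by simp
  finally show ?thesis .
qed


lemma carrier_E: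
  assumes "X \<in> umon_carrier S"
  obtains u where "u \<in> lists (arr S)" "X = umon_class S u"
  using assms that unfolding umon_carrier_def by blast

lemma cls_carrier: "u \<in> lists (arr S) \<Longrightarrow> umon_class S u \<in> umon_carrier S"
  unfolding umon_carrier_def by auto

lemma category_Umon:
  assumes S: "category S"
  shows "category (Umon S)"
proof -
  have one: "umon_one S \<in> umon_carrier S" unfolding umon_one_def by (rule cls_carrier) simp
  have lid: "umon_mult S (umon_one S) X = X" if H: "X \<in> umon_carrier S" for X
  proof -
    obtain u where u: "u \<in> lists (arr S)" "X = umon_class S u" using H by (rule carrier_E)
    show ?thesis using umon_mult_cls[OF S _ u(1), of "[]"] u(2) by (simp add: umon_one_def)
  qed
  have rid: "umon_mult S X (umon_one S) = X" if H: "X \<in> umon_carrier S" for X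
  proof -
    obtain u where u: "u \<in> lists (arr S)" "X = umon_class S u" using H by (rule carrier_E)
    show ?thesis using umon_mult_cls[OF S u(1), of "[]"] u(2) by (simp add: umon_one_def)
  qed
  have cl: "umon_mult S X Y \<in> umon_carrier S" if H: "X \<in> umon_carrier S" "Y \<in> umon_carrier S" for X Y
  proof -
    obtain u where u: "u \<in> lists (arr S)" "X = umon_class S u" using H(1) by (rule carrier_E)
    obtain v where v: "v \<in> lists (arr S)" "Y = umon_class S v" using H(2) by (rule carrier_E)
    show ?thesis using umon_mult_cls[OF S u(1) v(1)] u v cls_carrier[of "u @ v" S] by simp
  qed
  have as: "umon_mult S (umon_mult S X Y) Z = umon_mult S X (umon_mult S Y Z)"
    if H: "X \<in> umon_carrier S" "Y \<in> umon_carrier S" "Z \<in> umon_carrier S" for X Y Z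
  proof -
    obtain u where u: "u \<in> lists (arr S)" "X = umon_class S u" using H(1) by (rule carrier_E)
    obtain v where v: "v \<in> lists (arr S)" "Y = umon_class S v" using H(2) by (rule carrier_E)
    obtain w where w: "w \<in> lists (arr S)" "Z = umon_class S w" using H(3) by (rule carrier_E)
    have uv: "u @ v \<in> lists (arr S)" "v @ w \<in> lists (arr S)" using u v w by auto
    show ?thesis using umon_mult_cls[OF S u(1) v(1)] umon_mult_cls[OF S v(1) w(1)]
        umon_mult_cls[OF S uv(1) w(1)] umon_mult_cls[OF S u(1) uv(2)] u v w by simp
  qed
  show ?thesis unfolding category_def defined_def Umon_def
    using one lid rid cl as by simp
qed

definition iso :: "('a \<Rightarrow> 'b) \<Rightarrow> ('a,'c) cat_scheme \<Rightarrow> ('b,'d) cat_scheme \<Rightarrow> bool" where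
  "iso h C D \<longleftrightarrow> bij_betw h (arr C) (arr D)
     \<and> (\<forall>x\<in>arr C. h (src C x) = src D (h x) \<and> h (tgt C x) = tgt D (h x))
     \<and> (\<forall>x\<in>arr C. \<forall>y\<in>arr C. tgt C x = src C y \<longrightarrow> h (comp C x y) = comp D (h x) (h y))"

definition closed :: "('a,'c) cat_scheme \<Rightarrow> bool" where
  "closed C \<longleftrightarrow> (\<forall>x\<in>arr C. src C x \<in> arr C \<and> tgt C x \<in> arr C) \<and> (\<forall>x y. defined C x y \<longrightarrow> comp C x y \<in> arr C)"

lemma category_closed: "category C \<Longrightarrow> closed C"
proof -
  assume C: "category C"
  show ?thesis unfolding closed_def using catD(1,2,9)[OF C] by simp
qed

lemma ldiv_arr: "ldiv E x y \<Longrightarrow> x \<in> arr E" unfolding ldiv_def defined_def by auto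

locale isoloc =
  fixes h :: "'a \<Rightarrow> 'b" and C :: "('a,'c) cat_scheme" and D :: "('b,'d) cat_scheme"
  assumes iso: "iso h C D" and cl: "closed C"
begin

lemma bij: "bij_betw h (arr C) (arr D)" using iso unfolding iso_def by simp
lemma inj: "x \<in> arr C \<Longrightarrow> y \<in> arr C \<Longrightarrow> h x = h y \<longleftrightarrow> x = y"
  using bij unfolding bij_betw_def inj_on_def by blast
lemma harr: "x \<in> arr C \<Longrightarrow> h x \<in> arr D" using bij unfolding bij_betw_def by blast
lemma surjE: assumes "y \<in> arr D" obtains x where "x \<in> arr C" "y = h x"
  using bij assms unfolding bij_betw_def by blast
lemma hsrc: "x \<in> arr C \<Longrightarrow> src D (h x) = h (src C x)" using iso unfolding iso_def by simp
lemma htgt: "x \<in> arr C \<Longrightarrow> tgt D (h x) = h (tgt C x)" using iso unfolding iso_def by simp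
lemma clsrc: "x \<in> arr C \<Longrightarrow> src C x \<in> arr C" using cl unfolding closed_def by simp
lemma cltgt: "x \<in> arr C \<Longrightarrow> tgt C x \<in> arr C" using cl unfolding closed_def by simp
lemma clcomp: "defined C x y \<Longrightarrow> comp C x y \<in> arr C" using cl unfolding closed_def by simp

lemma hIds: "x \<in> arr C \<Longrightarrow> h x \<in> Ids D \<longleftrightarrow> x \<in> Ids C"
  unfolding Ids_def using harr hsrc inj clsrc by auto

lemma hdef: "x \<in> arr C \<Longrightarrow> y \<in> arr C \<Longrightarrow> defined D (h x) (h y) \<longleftrightarrow> defined C x y"
  unfolding defined_def using harr htgt hsrc inj clsrc cltgt by auto

lemma hcomp: "defined C x y \<Longrightarrow> h (comp C x y) = comp D (h x) (h y)"
  using iso unfolding iso_def defined_def by simp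

lemma hldiv: assumes "x \<in> arr C" "y \<in> arr C" shows "ldiv D (h x) (h y) \<longleftrightarrow> ldiv C x y"
proof
  assume "ldiv D (h x) (h y)"
  then obtain z' where z': "defined D (h x) z'" "h y = comp D (h x) z'" unfolding ldiv_def by blast
  have "z' \<in> arr D" using z' unfolding defined_def by simp
  then obtain z where z: "z \<in> arr C" "z' = h z" by (rule surjE)
  have d: "defined C x z" using hdef[OF assms(1) z(1)] z' z by simp
  have "h y = h (comp C x z)" using z' z hcomp[OF d] by simp
  then have "y = comp C x z" using inj[OF assms(2) clcomp[OF d]] by simp
  then show "ldiv C x y" using d unfolding ldiv_def by blast
next
  assume "ldiv C x y"
  then obtain z where z: "defined C x z" "y = comp C x z" unfolding ldiv_def by blast
  have "z \<in> arr C" using z unfolding defined_def by simp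
  then show "ldiv D (h x) (h y)" using z hdef[OF assms(1)] hcomp unfolding ldiv_def by metis
qed

lemma hgcd: assumes "a \<in> arr C" "b \<in> arr C" "c \<in> arr C"
  shows "is_left_gcd D (h a) (h b) (h c) \<longleftrightarrow> is_left_gcd C a b c"
proof
  assume g: "is_left_gcd D (h a) (h b) (h c)"
  show "is_left_gcd C a b c" unfolding is_left_gcd_def
  proof (intro conjI allI impI)
    show "ldiv C c a" "ldiv C c b" using g hldiv assms unfolding is_left_gcd_def by auto
    fix d assume "ldiv C d a \<and> ldiv C d b"
    moreover have d: "d \<in> arr C" using calculation ldiv_arr[of C d a] by blast
    ultimately have "ldiv D (h d) (h a) \<and> ldiv D (h d) (h b)" using hldiv assms by auto
    then have "ldiv D (h d) (h c)" using g unfolding is_left_gcd_def by blast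
    then show "ldiv C d c" using hldiv d assms by auto
  qed
next
  assume g: "is_left_gcd C a b c"
  show "is_left_gcd D (h a) (h b) (h c)" unfolding is_left_gcd_def
  proof (intro conjI allI impI)
    show "ldiv D (h c) (h a)" "ldiv D (h c) (h b)" using g hldiv assms unfolding is_left_gcd_def by auto
    fix d' assume dd: "ldiv D d' (h a) \<and> ldiv D d' (h b)"
    then have "d' \<in> arr D" using ldiv_arr[of D d' "h a"] by blast
    then obtain d where d: "d \<in> arr C" "d' = h d" by (rule surjE)
    show "ldiv D d' (h c)" using g hldiv assms dd d unfolding is_left_gcd_def by auto
  qed
qed

lemma conical_iff: "conical D \<longleftrightarrow> conical C"
proof
  assume cD: "conical D"
  show "conical C" unfolding conical_def
  proof (intro allI impI)
    fix x y assume xy: "defined C x y \<and> comp C x y \<in> Ids C"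
    have xa: "x \<in> arr C" "y \<in> arr C" using xy unfolding defined_def by auto
    have "defined D (h x) (h y)" using hdef xa xy by simp
    moreover have "comp D (h x) (h y) \<in> Ids D" using hcomp xy hIds clcomp by metis
    ultimately have "h x \<in> Ids D" using cD unfolding conical_def by blast
    then show "x \<in> Ids C" using hIds xa by simp
  qed
next
  assume cC: "conical C"
  show "conical D" unfolding conical_def
  proof (intro allI impI)
    fix x' y' assume xy: "defined D x' y' \<and> comp D x' y' \<in> Ids D"
    have "x' \<in> arr D" "y' \<in> arr D" using xy unfolding defined_def by auto
    then obtain x y where xa: "x \<in> arr C" "y \<in> arr C" "x' = h x" "y' = h y" by (metis surjE)
    have d: "defined C x y" using hdef xa xy by simp
    have "comp C x y \<in> Ids C" using hcomp[OF d] hIds[OF clcomp[OF d]] xy xa by simp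
    then show "x' \<in> Ids D" using cC d hIds xa unfolding conical_def by blast
  qed
qed

lemma lcanc_iff: "left_cancellative D \<longleftrightarrow> left_cancellative C"
proof
  assume cD: "left_cancellative D"
  show "left_cancellative C" unfolding left_cancellative_def
  proof (intro allI impI)
    fix a x y assume H: "defined C a x \<and> defined C a y \<and> comp C a x = comp C a y"
    have xa: "a \<in> arr C" "x \<in> arr C" "y \<in> arr C" using H unfolding defined_def by auto
    have "h x = h y" using cD H hdef hcomp xa unfolding left_cancellative_def by metis
    then show "x = y" using inj xa by simp
  qed
next
  assume cC: "left_cancellative C"
  show "left_cancellative D" unfolding left_cancellative_def
  proof (intro allI impI)
    fix a' x' y' assume H: "defined D a' x' \<and> defined D a' y' \<and> comp D a' x' = comp D a' y'"
    have "a' \<in> arr D" "x' \<in> arr D" "y' \<in> arr D" using H unfolding defined_def by auto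
    then obtain a x y where xa: "a \<in> arr C" "x \<in> arr C" "y \<in> arr C" "a' = h a" "x' = h x" "y' = h y"
      by (metis surjE)
    have d: "defined C a x" "defined C a y" using hdef xa H by auto
    have "h (comp C a x) = h (comp C a y)" using hcomp d H xa by simp
    then have "comp C a x = comp C a y" using inj clcomp d by simp
    then show "x' = y'" using cC d xa unfolding left_cancellative_def by blast
  qed
qed

lemma gcdex_iff:
  "(\<forall>a\<in>arr D. \<forall>b\<in>arr D. src D a = src D b \<longrightarrow> (\<exists>c. is_left_gcd D a b c))
   \<longleftrightarrow> (\<forall>a\<in>arr C. \<forall>b\<in>arr C. src C a = src C b \<longrightarrow> (\<exists>c. is_left_gcd C a b c))"
proof
  assume H: "\<forall>a\<in>arr D. \<forall>b\<in>arr D. src D a = src D b \<longrightarrow> (\<exists>c. is_left_gcd D a b c)"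
  show "\<forall>a\<in>arr C. \<forall>b\<in>arr C. src C a = src C b \<longrightarrow> (\<exists>c. is_left_gcd C a b c)"
  proof (intro ballI impI)
    fix a b assume ab: "a \<in> arr C" "b \<in> arr C" "src C a = src C b"
    have "src D (h a) = src D (h b)" using ab hsrc by simp
    then obtain c' where c': "is_left_gcd D (h a) (h b) c'" using H harr ab by blast
    have "c' \<in> arr D" using c' ldiv_arr[of D c' "h a"] unfolding is_left_gcd_def by blast
    then obtain c where c: "c \<in> arr C" "c' = h c" by (rule surjE)
    show "\<exists>c. is_left_gcd C a b c" using hgcd ab c c' by blast
  qed
next
  assume H: "\<forall>a\<in>arr C. \<forall>b\<in>arr C. src C a = src C b \<longrightarrow> (\<exists>c. is_left_gcd C a b c)"
  show "\<forall>a\<in>arr D. \<forall>b\<in>arr D. src D a = src D b \<longrightarrow> (\<exists>c. is_left_gcd D a b c)"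
  proof (intro ballI impI)
    fix a' b' assume ab': "a' \<in> arr D" "b' \<in> arr D" "src D a' = src D b'"
    obtain a where a: "a \<in> arr C" "a' = h a" using ab'(1) by (rule surjE)
    obtain b where b: "b \<in> arr C" "b' = h b" using ab'(2) by (rule surjE)
    have "h (src C a) = h (src C b)" using ab' a b hsrc by simp
    then have "src C a = src C b" using inj clsrc a b by simp
    then obtain c where c: "is_left_gcd C a b c" using H a b by blast
    have "c \<in> arr C" using c ldiv_arr[of C c a] unfolding is_left_gcd_def by blast
    then show "\<exists>c. is_left_gcd D a' b' c" using hgcd a b c by blast
  qed
qed

lemma left_gcd_iff: "left_gcd_cat D \<longleftrightarrow> left_gcd_cat C"
  unfolding left_gcd_cat_def using conical_iff lcanc_iff gcdex_iff by simp

end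


definition Ncat :: "('a,'b) cat_scheme \<Rightarrow> 'a list cat" where
  "Ncat S = \<lparr>arr = {p. normal S p}, src = (\<lambda>_. []), tgt = (\<lambda>_. []), comp = nmul S\<rparr>"

lemma nmul_normal: "category S \<Longrightarrow> normal S p \<Longrightarrow> normal S q \<Longrightarrow> normal S (nmul S p q)"
  unfolding nmul_def using foldr_normal normal_lists by blast

lemma Ncat_closed: "category S \<Longrightarrow> closed (Ncat S)"
  unfolding closed_def Ncat_def defined_def using nmul_normal by auto

lemma iso_Ncat:
  assumes S: "category S"
  shows "iso (umon_class S) (Ncat S) (Umon S)"
proof -
  have inj: "inj_on (umon_class S) {p. normal S p}"
  proof (rule inj_onI)
    fix p q assume H: "p \<in> {p. normal S p}" "q \<in> {p. normal S p}" "umon_class S p = umon_class S q"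
    then have "nf S p = nf S q" using cls_eq[OF S normal_lists normal_lists, of p q] by simp
    then show "p = q" using nf_id[of S p] nf_id[of S q] H by simp
  qed
  have img: "umon_class S ` {p. normal S p} = umon_carrier S"
  proof
    show "umon_class S ` {p. normal S p} \<subseteq> umon_carrier S"
    proof
      fix X assume "X \<in> umon_class S ` {p. normal S p}"
      then obtain p where "normal S p" "X = umon_class S p" by blast
      then show "X \<in> umon_carrier S" using cls_carrier[OF normal_lists[of S p]] by simp
    qed
    show "umon_carrier S \<subseteq> umon_class S ` {p. normal S p}"
    proof
      fix X assume "X \<in> umon_carrier S"
      then obtain u where u: "u \<in> lists (arr S)" "X = umon_class S u" by (rule carrier_E)
      have "umon_class S u = umon_class S (nf S u)"
        using cls_eq[OF S u(1) normal_lists[OF nf_normal[OF S u(1)]]] nf_id[OF nf_normal[OF S u(1)]] by simp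
      then show "X \<in> umon_class S ` {p. normal S p}" using u nf_normal[OF S u(1)] by auto
    qed
  qed
  have cmp: "umon_class S (nmul S p q) = umon_mult S (umon_class S p) (umon_class S q)"
    if H: "normal S p" "normal S q" for p q
  proof -
    have "umon_mult S (umon_class S p) (umon_class S q) = umon_class S (p @ q)"
      using umon_mult_cls[OF S normal_lists[OF H(1)] normal_lists[OF H(2)]] .
    moreover have "nf S (p @ q) = nmul S p q"
      using nf_append[OF S normal_lists[OF H(1)] normal_lists[OF H(2)]] nf_id[of S p] nf_id[of S q] H by simp
    moreover have "nf S (nmul S p q) = nmul S p q" using nf_id[of S] nmul_normal[OF S H] by blast
    moreover have "p @ q \<in> lists (arr S)" using normal_lists H by auto
    ultimately show ?thesis using cls_eq[OF S normal_lists[OF nmul_normal[OF S H]], of "p @ q"] by simp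
  qed
  have a1: "arr (Ncat S) = {p. normal S p}" "arr (Umon S) = umon_carrier S"
    "\<And>x. src (Ncat S) x = []" "\<And>x. tgt (Ncat S) x = []"
    "\<And>x. src (Umon S) x = umon_class S []" "\<And>x. tgt (Umon S) x = umon_class S []"
    "comp (Ncat S) = nmul S" "comp (Umon S) = umon_mult S"
    by (simp_all add: Ncat_def Umon_def umon_one_def)
  show ?thesis unfolding iso_def bij_betw_def a1
    using inj img cmp by blast
qed

definition op :: "('a,'b) cat_scheme \<Rightarrow> 'a cat" where
  "op C = \<lparr>arr = arr C, src = tgt C, tgt = src C, comp = (\<lambda>x y. comp C y x)\<rparr>"

lemma op_simps[simp]: "arr (op C) = arr C" "src (op C) = tgt C" "tgt (op C) = src C"
  "comp (op C) x y = comp C y x"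
  by (simp_all add: op_def)

lemma defined_op: "defined (op C) x y \<longleftrightarrow> defined C y x"
  unfolding defined_def by auto

lemma Ids_op: "category C \<Longrightarrow> Ids (op C) = Ids C"
proof -
  assume C: "category C"
  have "tgt C x = x \<longleftrightarrow> src C x = x" if H: "x \<in> arr C" for x
  proof
    assume "tgt C x = x" then show "src C x = x" using catD(5)[OF C H] by simp
  next
    assume "src C x = x" then show "tgt C x = x" using catD(4)[OF C H] by simp
  qed
  then show ?thesis unfolding Ids_def by auto
qed

lemma category_op:
  assumes C: "category C"
  shows "category (op C)"
proof -
  have 1: "\<forall>x\<in>arr C. tgt C x \<in> arr C \<and> src C x \<in> arr C
        \<and> tgt C (tgt C x) = tgt C x \<and> src C (tgt C x) = tgt C x
        \<and> tgt C (src C x) = src C x \<and> src C (src C x) = src C x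
        \<and> comp C x (tgt C x) = x \<and> comp C (src C x) x = x"
    using catD(1-8)[OF C] by simp
  have 2: "\<forall>x y. defined C y x \<longrightarrow> comp C y x \<in> arr C
        \<and> tgt C (comp C y x) = tgt C x \<and> src C (comp C y x) = src C y"
    using catD(9-11)[OF C] by simp
  have 3: "\<forall>x y z. defined C y x \<and> defined C z y \<longrightarrow>
        comp C z (comp C y x) = comp C (comp C z y) x"
    using catD(12)[OF C] by simp
  show ?thesis unfolding category_def defined_op op_simps by (intro conjI) (fact 1, fact 2, fact 3)
qed

lemma conical_op:
  assumes C: "category C"
  shows "conical (op C) \<longleftrightarrow> conical C"
proof
  assume H: "conical (op C)"
  show "conical C" unfolding conical_def
  proof (intro allI impI)
    fix x y assume xy: "defined C x y \<and> comp C x y \<in> Ids C"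
    then have "y \<in> Ids C" using H unfolding conical_def defined_op Ids_op[OF C] by auto
    then have "comp C x y = x" using Ids_compR[OF C] xy by blast
    then show "x \<in> Ids C" using xy by simp
  qed
next
  assume H: "conical C"
  show "conical (op C)" unfolding conical_def defined_op Ids_op[OF C] op_simps
  proof (intro allI impI)
    fix x y assume xy: "defined C y x \<and> comp C y x \<in> Ids C"
    then have "y \<in> Ids C" using H unfolding conical_def by auto
    then have "comp C y x = x" using Ids_compL[OF C] xy by blast
    then show "x \<in> Ids C" using xy by simp
  qed
qed

lemma ldiv_op: "ldiv (op C) a b \<longleftrightarrow> rdiv C a b"
  unfolding ldiv_def rdiv_def defined_op by simp

lemma gcd_op: "is_left_gcd (op C) a b c \<longleftrightarrow> is_right_gcd C a b c"
  unfolding is_left_gcd_def is_right_gcd_def ldiv_op ..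

lemma lcanc_op: "left_cancellative (op C) \<longleftrightarrow> right_cancellative C"
  unfolding left_cancellative_def right_cancellative_def defined_op by simp

lemma left_op: "category C \<Longrightarrow> left_gcd_cat (op C) \<longleftrightarrow> right_gcd_cat C"
  unfolding left_gcd_cat_def right_gcd_cat_def conical_op lcanc_op gcd_op by simp

lemma rel_op_rev:
  assumes S: "category S"
  shows "umon_rel (op S) u v \<Longrightarrow> umon_rel S (rev u) (rev v)"
proof (induction rule: umon_rel.induct)
  case (refl u)
  have "rev u \<in> lists (arr S)" using refl by (simp add: in_lists_conv_set)
  then show ?case by (rule umon_rel.refl)
next
  case (sym u v) show ?case using sym.IH by (rule umon_rel.sym)
next
  case (trans u v w) show ?case using trans.IH(1) trans.IH(2) by (rule umon_rel.trans)
next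
  case (ctxt u v w1 w2)
  have l1: "rev w1 \<in> lists (arr S)" using ctxt.hyps(2) by (simp add: in_lists_conv_set)
  have l2: "rev w2 \<in> lists (arr S)" using ctxt.hyps(3) by (simp add: in_lists_conv_set)
  have "umon_rel S (rev w2 @ rev u @ rev w1) (rev w2 @ rev v @ rev w1)"
    by (rule umon_rel.ctxt[OF ctxt.IH l2 l1])
  then show ?case by simp
next
  case (ident e)
  have "e \<in> Ids S" using ident Ids_op[OF S] by simp
  then show ?case using umon_rel.ident by simp
next
  case (compose x y)
  have "defined S y x" using compose by (simp add: defined_op)
  then have "umon_rel S [y, x] [comp S y x]" by (rule umon_rel.compose)
  then show ?case by simp
qed

lemma rel_rev_op:
  assumes S: "category S"
  shows "umon_rel S u v \<Longrightarrow> umon_rel (op S) (rev u) (rev v)"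
proof (induction rule: umon_rel.induct)
  case (refl u)
  have "rev u \<in> lists (arr (op S))" using refl by (simp add: in_lists_conv_set)
  then show ?case by (rule umon_rel.refl)
next
  case (sym u v) show ?case using sym.IH by (rule umon_rel.sym)
next
  case (trans u v w) show ?case using trans.IH(1) trans.IH(2) by (rule umon_rel.trans)
next
  case (ctxt u v w1 w2)
  have l1: "rev w1 \<in> lists (arr (op S))" using ctxt.hyps(2) by (simp add: in_lists_conv_set)
  have l2: "rev w2 \<in> lists (arr (op S))" using ctxt.hyps(3) by (simp add: in_lists_conv_set)
  have "umon_rel (op S) (rev w2 @ rev u @ rev w1) (rev w2 @ rev v @ rev w1)"
    by (rule umon_rel.ctxt[OF ctxt.IH l2 l1])
  then show ?case by simp
next
  case (ident e)
  have "e \<in> Ids (op S)" using ident Ids_op[OF S] by simp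
  then show ?case using umon_rel.ident by simp
next
  case (compose x y)
  have "defined (op S) y x" using compose by (simp add: defined_op)
  then have "umon_rel (op S) [y, x] [comp (op S) y x]" by (rule umon_rel.compose)
  then show ?case by simp
qed

lemma cls_op:
  assumes S: "category S"
  shows "umon_class (op S) u = rev ` umon_class S (rev u)"
proof -
  have E: "v \<in> umon_class (op S) u \<longleftrightarrow> rev v \<in> umon_class S (rev u)" for v
  proof
    assume "v \<in> umon_class (op S) u"
    then have "umon_rel (op S) u v" unfolding umon_class_def by simp
    then have "umon_rel S (rev u) (rev v)" by (rule rel_op_rev[OF S])
    then show "rev v \<in> umon_class S (rev u)" unfolding umon_class_def by simp
  next
    assume "rev v \<in> umon_class S (rev u)"
    then have "umon_rel S (rev u) (rev v)" unfolding umon_class_def by simp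
    then have "umon_rel (op S) (rev (rev u)) (rev (rev v))" by (rule rel_rev_op[OF S])
    then show "v \<in> umon_class (op S) u" unfolding umon_class_def by simp
  qed
  show ?thesis
  proof
    show "umon_class (op S) u \<subseteq> rev ` umon_class S (rev u)"
    proof
      fix v assume "v \<in> umon_class (op S) u"
      then have "rev v \<in> umon_class S (rev u)" using E by blast
      then show "v \<in> rev ` umon_class S (rev u)" using image_eqI[of v rev "rev v"] by simp
    qed
    show "rev ` umon_class S (rev u) \<subseteq> umon_class (op S) u"
    proof
      fix v assume "v \<in> rev ` umon_class S (rev u)"
      then obtain w where "w \<in> umon_class S (rev u)" "v = rev w" by blast
      then show "v \<in> umon_class (op S) u" using E[of v] by simp
    qed
  qed
qed

lemma iso_rev:
  assumes S: "category S"
  shows "iso (\<lambda>X. rev ` X) (Umon (op S)) (op (Umon S))"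
proof -
  note So = category_op[OF S]
  have h: "rev ` umon_class (op S) u = umon_class S (rev u)" for u
    using cls_op[OF S, of u] by (simp add: image_image)
  have inj: "inj_on (\<lambda>X. rev ` X) (umon_carrier (op S))"
    by (rule inj_onI) (simp add: inj_image_eq_iff[OF inj_on_rev[of UNIV]])
  have img: "(\<lambda>X. rev ` X) ` umon_carrier (op S) = umon_carrier S"
  proof
    show "(\<lambda>X. rev ` X) ` umon_carrier (op S) \<subseteq> umon_carrier S"
    proof
      fix X assume "X \<in> (\<lambda>X. rev ` X) ` umon_carrier (op S)"
      then obtain u where u: "u \<in> lists (arr S)" "X = rev ` umon_class (op S) u"
        unfolding umon_carrier_def by auto
      then have "X = umon_class S (rev u)" using h by simp
      moreover have "rev u \<in> lists (arr S)" using u by (simp add: in_lists_conv_set)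
      ultimately show "X \<in> umon_carrier S" using cls_carrier[of "rev u" S] by simp
    qed
    show "umon_carrier S \<subseteq> (\<lambda>X. rev ` X) ` umon_carrier (op S)"
    proof
      fix X assume "X \<in> umon_carrier S"
      then obtain u where u: "u \<in> lists (arr S)" "X = umon_class S u" by (rule carrier_E)
      have "X = rev ` umon_class (op S) (rev u)" using h[of "rev u"] u by simp
      moreover have "rev u \<in> lists (arr (op S))" using u by (simp add: in_lists_conv_set)
      moreover have "umon_class (op S) (rev u) \<in> umon_carrier (op S)"
        using calculation(2) cls_carrier[of "rev u" "op S"] by simp
      ultimately show "X \<in> (\<lambda>X. rev ` X) ` umon_carrier (op S)" by blast
    qed
  qed
  have cmp: "rev ` umon_mult (op S) X Y = umon_mult S (rev ` Y) (rev ` X)"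
    if H: "X \<in> umon_carrier (op S)" "Y \<in> umon_carrier (op S)" for X Y
  proof -
    obtain u where u: "u \<in> lists (arr (op S))" "X = umon_class (op S) u" using H(1) by (rule carrier_E)
    obtain v where v: "v \<in> lists (arr (op S))" "Y = umon_class (op S) v" using H(2) by (rule carrier_E)
    have "rev ` umon_mult (op S) X Y = umon_class S (rev v @ rev u)"
      using umon_mult_cls[OF So u(1) v(1)] u v h by simp
    also have "\<dots> = umon_mult S (rev ` Y) (rev ` X)"
    proof -
      have l: "rev v \<in> lists (arr S)" "rev u \<in> lists (arr S)" using u(1) v(1) by (simp_all add: in_lists_conv_set)
      have "rev ` Y = umon_class S (rev v)" "rev ` X = umon_class S (rev u)" using u(2) v(2) h by simp_all
      then show ?thesis using umon_mult_cls[OF S l] by simp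
    qed
    finally show ?thesis .
  qed
  have one: "rev ` umon_one (op S) = umon_one S" using h[of "[]"] by (simp add: umon_one_def)
  have a1: "arr (Umon (op S)) = umon_carrier (op S)" "arr (op (Umon S)) = umon_carrier S"
    "\<And>x. src (Umon (op S)) x = umon_one (op S)" "\<And>x. tgt (Umon (op S)) x = umon_one (op S)"
    "\<And>x. src (op (Umon S)) x = umon_one S" "\<And>x. tgt (op (Umon S)) x = umon_one S"
    "\<And>x y. comp (Umon (op S)) x y = umon_mult (op S) x y"
    "\<And>x y. comp (op (Umon S)) x y = umon_mult S y x"
    by (simp_all add: Umon_def)
  show ?thesis unfolding iso_def bij_betw_def a1
  proof (intro conjI ballI impI)
    show "inj_on (image rev) (umon_carrier (op S))" using inj .
    show "image rev ` umon_carrier (op S) = umon_carrier S" using img .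
  next
    fix x assume "x \<in> umon_carrier (op S)"
    show "rev ` umon_one (op S) = umon_one S" using one .
    show "rev ` umon_one (op S) = umon_one S" using one .
  next
    fix x y assume "x \<in> umon_carrier (op S)" "y \<in> umon_carrier (op S)"
    then show "rev ` umon_mult (op S) x y = umon_mult S (rev ` y) (rev ` x)" using cmp by blast
  qed
qed


lemma Ncat_simps: "arr (Ncat S) = {p. normal S p}" "src (Ncat S) x = []" "tgt (Ncat S) x = []"
  "comp (Ncat S) p q = nmul S p q"
  by (simp_all add: Ncat_def)

lemma Ncat_defined: "defined (Ncat S) p q \<longleftrightarrow> normal S p \<and> normal S q"
  unfolding defined_def Ncat_simps by simp

lemma Ncat_Ids: "Ids (Ncat S) = {[]}"
  unfolding Ids_def Ncat_simps by auto

definition ndiv :: "('a,'b) cat_scheme \<Rightarrow> 'a list \<Rightarrow> 'a list \<Rightarrow> bool" where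
  "ndiv S d p \<longleftrightarrow> (\<exists>r. normal S r \<and> p = nmul S d r)"

lemma Ncat_ldiv: "ldiv (Ncat S) d p \<longleftrightarrow> normal S d \<and> ndiv S d p"
  unfolding ldiv_def ndiv_def Ncat_defined Ncat_simps by blast

lemma nmul_Nil[simp]: "nmul S [] q = q" by (simp add: nmul_def)
lemma nmul_Cons: "nmul S (a # d) r = cns S a (nmul S d r)" by (simp add: nmul_def)

lemma ldiv_refl: "category S \<Longrightarrow> a \<in> arr S \<Longrightarrow> ldiv S a a"
  unfolding ldiv_def defined_def using catD(2,5,8)[of S a] by metis

lemma ldiv_src: "category S \<Longrightarrow> ldiv S c a \<Longrightarrow> src S a = src S c"
  unfolding ldiv_def using catD(10) by metis

lemma cns_nil: "a \<notin> Ids S \<Longrightarrow> cns S a [] = [a]" by (simp add: cns_def)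

lemma cns_nomerge: "a \<notin> Ids S \<Longrightarrow> tgt S a \<noteq> src S b \<Longrightarrow> cns S a (b # r) = a # b # r"
  by (simp add: cns_def)

lemma conicalD: "conical S \<Longrightarrow> defined S x y \<Longrightarrow> x \<notin> Ids S \<Longrightarrow> comp S x y \<notin> Ids S"
  unfolding conical_def by blast

lemma cns_merge: "conical S \<Longrightarrow> a \<in> arr S \<Longrightarrow> a \<notin> Ids S \<Longrightarrow> b \<in> arr S \<Longrightarrow> tgt S a = src S b
  \<Longrightarrow> cns S a (b # r) = comp S a b # r"
  using conicalD[of S a b] unfolding defined_def by (simp add: cns_def)

lemma nmul_hd:
  assumes S: "category S" and cS: "conical S"
  shows "normal S d \<Longrightarrow> d \<noteq> [] \<Longrightarrow> normal S r \<Longrightarrow> \<exists>x rest. nmul S d r = x # rest \<and> src S x = src S (hd d)"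
proof (induction d)
  case Nil then show ?case by simp
next
  case (Cons c d)
  have c: "c \<in> arr S" "c \<notin> Ids S" "normal S d" using Cons.prems by (auto simp: normal_Cons)
  show ?case
  proof (cases "d = []")
    case True
    show ?thesis
    proof (cases r)
      case Nil then show ?thesis using True c by (simp add: nmul_Cons cns_nil)
    next
      case (Cons b r')
      have b: "b \<in> arr S" using Cons \<open>normal S r\<close> by (simp add: normal_Cons)
      show ?thesis
      proof (cases "tgt S c = src S b")
        case True
        have "defined S c b" using c b True by (simp add: defined_def)
        then have "src S (comp S c b) = src S c" by (rule catD(10)[OF S])
        then show ?thesis using \<open>d = []\<close> Cons cns_merge[OF cS c(1,2) b True] by (simp add: nmul_Cons)
      next
        case False
        then show ?thesis using \<open>d = []\<close> Cons cns_nomerge[OF c(2) False] by (simp add: nmul_Cons)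
      qed
    qed
  next
    case False
    obtain x rest where xr: "nmul S d r = x # rest" "src S x = src S (hd d)"
      using Cons.IH[OF c(3) False Cons.prems(3)] by blast
    have "tgt S c \<noteq> src S (hd d)" using Cons.prems(1) False by (simp add: normal_Cons)
    then have "cns S c (x # rest) = c # x # rest" using cns_nomerge[OF c(2)] xr(2) by simp
    then show ?thesis using xr by (simp add: nmul_Cons)
  qed
qed

lemma nmul_cons2:
  assumes S: "category S" and cS: "conical S" and n: "normal S (a # d)" "d \<noteq> []" "normal S r"
  shows "nmul S (a # d) r = a # nmul S d r"
proof -
  have d: "normal S d" "a \<notin> Ids S" "tgt S a \<noteq> src S (hd d)" using n by (auto simp: normal_Cons)
  obtain x rest where xr: "nmul S d r = x # rest" "src S x = src S (hd d)"
    using nmul_hd[OF S cS d(1) n(2) n(3)] by blast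
  show ?thesis using xr cns_nomerge[OF d(2), of x rest] d(3) by (simp add: nmul_Cons)
qed

lemma nmul_ne:
  assumes S: "category S" and cS: "conical S"
  shows "normal S d \<Longrightarrow> d \<noteq> [] \<Longrightarrow> normal S r \<Longrightarrow> nmul S d r \<noteq> []"
  using nmul_hd[OF S cS] by fastforce

lemma div_nil:
  assumes S: "category S" and cS: "conical S" and d: "normal S d"
  shows "ndiv S d [] \<longleftrightarrow> d = []"
proof
  assume "ndiv S d []"
  then obtain r where "normal S r" "[] = nmul S d r" unfolding ndiv_def by blast
  then show "d = []" using nmul_ne[OF S cS d] by metis
next
  assume "d = []"
  then show "ndiv S d []" unfolding ndiv_def by auto
qed

lemma div_cons:
  assumes S: "category S" and cS: "conical S" and d: "normal S d" and p: "normal S (a # p')"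
  shows "ndiv S d (a # p') \<longleftrightarrow> d = [] \<or> (\<exists>c. d = [c] \<and> ldiv S c a)
     \<or> (\<exists>d'. d = a # d' \<and> d' \<noteq> [] \<and> ndiv S d' p')"
proof
  assume "ndiv S d (a # p')"
  then obtain r where r: "normal S r" "a # p' = nmul S d r" unfolding ndiv_def by blast
  have a: "a \<in> arr S" "a \<notin> Ids S" "normal S p'" "p' \<noteq> [] \<longrightarrow> tgt S a \<noteq> src S (hd p')"
    using p by (auto simp: normal_Cons)
  show "d = [] \<or> (\<exists>c. d = [c] \<and> ldiv S c a) \<or> (\<exists>d'. d = a # d' \<and> d' \<noteq> [] \<and> ndiv S d' p')"
  proof (cases d)
    case Nil then show ?thesis by simp
  next
    case (Cons c d')
    have c: "c \<in> arr S" "c \<notin> Ids S" using d Cons by (auto simp: normal_Cons)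
    show ?thesis
    proof (cases "d' = []")
      case True
      have "ldiv S c a"
      proof (cases r)
        case Nil
        then have "a = c" using r Cons True cns_nil[OF c(2)] by (simp add: nmul_Cons)
        then show ?thesis using ldiv_refl[OF S a(1)] by simp
      next
        case (Cons b r')
        have b: "b \<in> arr S" using Cons r(1) by (simp add: normal_Cons)
        show ?thesis
        proof (cases "tgt S c = src S b")
          case True
          have "a = comp S c b" using r \<open>d = c # d'\<close> \<open>d' = []\<close> Cons cns_merge[OF cS c b True]
            by (simp add: nmul_Cons)
          then show ?thesis unfolding ldiv_def defined_def using c b True by blast
        next
          case False
          then have "a = c" using r \<open>d = c # d'\<close> \<open>d' = []\<close> Cons cns_nomerge[OF c(2) False]
            by (simp add: nmul_Cons)
          then show ?thesis using ldiv_refl[OF S a(1)] by simp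
        qed
      qed
      then show ?thesis using Cons True by simp
    next
      case False
      have "nmul S d r = c # nmul S d' r" using nmul_cons2[OF S cS _ False r(1)] d Cons by simp
      then have "c = a" "p' = nmul S d' r" using r by simp_all
      then show ?thesis using Cons False r(1) unfolding ndiv_def by blast
    qed
  qed
next
  have a: "a \<in> arr S" "a \<notin> Ids S" "normal S p'" "p' \<noteq> [] \<longrightarrow> tgt S a \<noteq> src S (hd p')"
    using p by (auto simp: normal_Cons)
  assume "d = [] \<or> (\<exists>c. d = [c] \<and> ldiv S c a) \<or> (\<exists>d'. d = a # d' \<and> d' \<noteq> [] \<and> ndiv S d' p')"
  then consider "d = []" | c where "d = [c]" "ldiv S c a" | d' where "d = a # d'" "d' \<noteq> []" "ndiv S d' p'"
    by blast
  then show "ndiv S d (a # p')"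
  proof cases
    case 1 then show ?thesis unfolding ndiv_def using p by auto
  next
    case 2
    have c: "c \<in> arr S" "c \<notin> Ids S" using d 2 by (auto simp: normal_Cons)
    obtain x where x: "defined S c x" "a = comp S c x" using 2 unfolding ldiv_def by blast
    show ?thesis
    proof (cases "x \<in> Ids S")
      case True
      have "a = c" using x Ids_compR[OF S True] by simp
      then have "nmul S d p' = a # p'" using 2 cns_normal_self[OF p] by (simp add: nmul_Cons)
      then show ?thesis unfolding ndiv_def using a(3) by metis
    next
      case False
      have xa: "x \<in> arr S" "tgt S c = src S x" using x unfolding defined_def by auto
      have "tgt S a = tgt S x" using x catD(11)[OF S x(1)] by simp
      then have "normal S (x # p')" using xa(1) False a(3,4) by (simp add: normal_Cons)
      moreover have "nmul S d (x # p') = a # p'"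
        using 2 cns_merge[OF cS c xa(1) xa(2)] x(2) by (simp add: nmul_Cons)
      ultimately show ?thesis unfolding ndiv_def by metis
    qed
  next
    case 3
    obtain r where r: "normal S r" "p' = nmul S d' r" using 3 unfolding ndiv_def by blast
    have "nmul S d r = a # nmul S d' r" using nmul_cons2[OF S cS _ 3(2) r(1)] d 3(1) by simp
    then show ?thesis unfolding ndiv_def using r by metis
  qed
qed

lemma div_hd:
  assumes S: "category S" and cS: "conical S" and d: "normal S d" "d \<noteq> []" and p: "normal S p"
    and dv: "ndiv S d p"
  shows "p \<noteq> [] \<and> src S (hd d) = src S (hd p)"
proof (cases p)
  case Nil then show ?thesis using div_nil[OF S cS d(1)] dv d(2) by simp
next
  case (Cons a p')
  have "(\<exists>c. d = [c] \<and> ldiv S c a) \<or> (\<exists>d'. d = a # d' \<and> d' \<noteq> [] \<and> ndiv S d' p')"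
    using div_cons[OF S cS d(1)] p Cons dv d(2) by simp
  then show ?thesis using Cons ldiv_src[OF S] by auto
qed


lemma ndiv_Nil: "normal S p \<Longrightarrow> ndiv S [] p"
  unfolding ndiv_def by auto

lemma conical_Ncat:
  assumes S: "category S"
  shows "conical (Ncat S) \<longleftrightarrow> conical S"
proof -
  have e: "conical (Ncat S) \<longleftrightarrow> (\<forall>p q. normal S p \<and> normal S q \<and> nmul S p q = [] \<longrightarrow> p = [])"
    unfolding conical_def Ncat_defined Ncat_simps Ncat_Ids by auto
  show ?thesis
  proof
    assume H: "conical (Ncat S)"
    show "conical S" unfolding conical_def
    proof (intro allI impI)
      fix x y assume xy: "defined S x y \<and> comp S x y \<in> Ids S"
      show "x \<in> Ids S"
      proof (rule ccontr)
        assume xN: "x \<notin> Ids S"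
        have xa: "x \<in> arr S" "y \<in> arr S" using xy unfolding defined_def by auto
        have n1: "normal S [x]" using xa xN by simp
        have n2: "normal S (nf S [y])" using nf_normal[OF S] xa by simp
        have "nmul S [x] (nf S [y]) = cns S x (cns S y [])" by (simp add: nmul_def nf_def)
        also have "\<dots> = cns S (comp S x y) []" using cns_comp[OF S _ ] xy by simp
        also have "\<dots> = []" using xy by (simp add: cns_def)
        finally have "[x] = []" using H e n1 n2 by blast
        then show False by simp
      qed
    qed
  next
    assume cS: "conical S"
    show "conical (Ncat S)" unfolding e using nmul_ne[OF S cS] by blast
  qed
qed

lemma cns_canc:
  assumes S: "category S" and cS: "conical S" and lc: "left_cancellative S"
    and a: "a \<in> arr S" "a \<notin> Ids S" and q: "normal S q" and q': "normal S q'"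
    and e: "cns S a q = cns S a q'"
  shows "q = q'"
proof -
  have F1: "comp S a b \<noteq> a" if "b \<in> arr S" "b \<notin> Ids S" "tgt S a = src S b" for b
  proof
    assume "comp S a b = a"
    moreover have "comp S a (tgt S a) = a" using catD(8)[OF S a(1)] .
    moreover have "defined S a b" "defined S a (tgt S a)"
      using that a catD(2,5)[OF S a(1)] unfolding defined_def by auto
    ultimately have "b = tgt S a" using lc unfolding left_cancellative_def by metis
    then show False using tgt_Ids[OF S a(1)] that(2) by simp
  qed
  have F2: "b = b'" if "b \<in> arr S" "b' \<in> arr S" "tgt S a = src S b" "tgt S a = src S b'"
    "comp S a b = comp S a b'" for b b'
    using that a lc unfolding left_cancellative_def defined_def by blast
  show ?thesis
  proof (cases q)
    case Nil
    show ?thesis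
    proof (cases q')
      case Nil then show ?thesis using \<open>q = []\<close> by simp
    next
      case (Cons b' r')
      have b': "b' \<in> arr S" "b' \<notin> Ids S" using q' Cons by (auto simp: normal_Cons)
      show ?thesis
      proof (cases "tgt S a = src S b'")
        case True
        have "[a] = comp S a b' # r'" using e \<open>q = []\<close> Cons cns_nil[OF a(2)] cns_merge[OF cS a b'(1) True] by simp
        then show ?thesis using F1[OF b' True] by simp
      next
        case False
        have "[a] = a # b' # r'" using e \<open>q = []\<close> Cons cns_nil[OF a(2)] cns_nomerge[OF a(2) False] by simp
        then show ?thesis by simp
      qed
    qed
  next
    case (Cons b r)
    have b: "b \<in> arr S" "b \<notin> Ids S" using q Cons by (auto simp: normal_Cons)
    show ?thesis
    proof (cases q')
      case Nil
      show ?thesis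
      proof (cases "tgt S a = src S b")
        case True
        have "[a] = comp S a b # r" using e \<open>q' = []\<close> Cons cns_nil[OF a(2)] cns_merge[OF cS a b(1) True] by simp
        then show ?thesis using F1[OF b True] by simp
      next
        case False
        have "[a] = a # b # r" using e \<open>q' = []\<close> Cons cns_nil[OF a(2)] cns_nomerge[OF a(2) False] by simp
        then show ?thesis by simp
      qed
    next
      case C': (Cons b' r')
      have b': "b' \<in> arr S" "b' \<notin> Ids S" using q' C' by (auto simp: normal_Cons)
      show ?thesis
      proof (cases "tgt S a = src S b")
        case T1: True
        show ?thesis
        proof (cases "tgt S a = src S b'")
          case T2: True
          have "comp S a b # r = comp S a b' # r'"
            using e Cons C' cns_merge[OF cS a b(1) T1] cns_merge[OF cS a b'(1) T2] by simp
          then show ?thesis using F2[OF b(1) b'(1) T1 T2] Cons C' by simp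
        next
          case F2': False
          have "comp S a b # r = a # b' # r'"
            using e Cons C' cns_merge[OF cS a b(1) T1] cns_nomerge[OF a(2) F2'] by simp
          then show ?thesis using F1[OF b T1] by simp
        qed
      next
        case F1': False
        show ?thesis
        proof (cases "tgt S a = src S b'")
          case T2: True
          have "a # b # r = comp S a b' # r'"
            using e Cons C' cns_nomerge[OF a(2) F1'] cns_merge[OF cS a b'(1) T2] by simp
          then show ?thesis using F1[OF b' T2] by simp
        next
          case F2': False
          have "a # b # r = a # b' # r'"
            using e Cons C' cns_nomerge[OF a(2) F1'] cns_nomerge[OF a(2) F2'] by simp
          then show ?thesis using Cons C' by simp
        qed
      qed
    qed
  qed
qed

lemma nmul_canc:
  assumes S: "category S" and cS: "conical S" and lc: "left_cancellative S"
  shows "normal S p \<Longrightarrow> normal S q \<Longrightarrow> normal S q' \<Longrightarrow> nmul S p q = nmul S p q' \<Longrightarrow> q = q'"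
proof (induction p arbitrary: q q')
  case Nil then show ?case by simp
next
  case (Cons a d)
  have a: "a \<in> arr S" "a \<notin> Ids S" "normal S d" using Cons.prems(1) by (auto simp: normal_Cons)
  show ?case
  proof (cases "d = []")
    case True
    then show ?thesis using cns_canc[OF S cS lc a(1,2) Cons.prems(2,3)] Cons.prems(4) by (simp add: nmul_Cons)
  next
    case False
    have "a # nmul S d q = a # nmul S d q'"
      using nmul_cons2[OF S cS Cons.prems(1) False] Cons.prems by simp
    then show ?thesis using Cons.IH[OF a(3) Cons.prems(2,3)] by simp
  qed
qed

lemma lcanc_Ncat:
  assumes S: "category S" and cS: "conical S"
  shows "left_cancellative (Ncat S) \<longleftrightarrow> left_cancellative S"
proof -
  have e: "left_cancellative (Ncat S) \<longleftrightarrow>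
     (\<forall>a x y. normal S a \<and> normal S x \<and> normal S y \<and> nmul S a x = nmul S a y \<longrightarrow> x = y)"
    unfolding left_cancellative_def Ncat_defined Ncat_simps by blast
  show ?thesis
  proof
    assume H: "left_cancellative (Ncat S)"
    show "left_cancellative S" unfolding left_cancellative_def
    proof (intro allI impI)
      fix a x y assume A: "defined S a x \<and> defined S a y \<and> comp S a x = comp S a y"
      have ar: "a \<in> arr S" "x \<in> arr S" "y \<in> arr S" "tgt S a = src S x" "tgt S a = src S y"
        using A unfolding defined_def by auto
      show "x = y"
      proof (cases "a \<in> Ids S")
        case True
        then show ?thesis using A Ids_compL[OF S True] by metis
      next
        case aN: False
        have mx: "nmul S [a] (if x \<in> Ids S then [] else [x]) = [comp S a x]"
        proof (cases "x \<in> Ids S")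
          case True
          have "comp S a x = a" using Ids_compR[OF S True] A by blast
          then show ?thesis using aN True by (simp add: nmul_Cons cns_nil)
        next
          case False
          then show ?thesis using aN cns_merge[OF cS ar(1) aN ar(2) ar(4), of "[]"] by (simp add: nmul_Cons)
        qed
        have my: "nmul S [a] (if y \<in> Ids S then [] else [y]) = [comp S a y]"
        proof (cases "y \<in> Ids S")
          case True
          have "comp S a y = a" using Ids_compR[OF S True] A by blast
          then show ?thesis using aN True by (simp add: nmul_Cons cns_nil)
        next
          case False
          then show ?thesis using aN cns_merge[OF cS ar(1) aN ar(3) ar(5), of "[]"] by (simp add: nmul_Cons)
        qed
        have n: "normal S [a]" "normal S (if x \<in> Ids S then [] else [x])" "normal S (if y \<in> Ids S then [] else [y])"
          using ar aN by auto
        have "(if x \<in> Ids S then [] else [x]) = (if y \<in> Ids S then [] else [y])"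
        proof -
          have HH: "\<forall>a x y. normal S a \<and> normal S x \<and> normal S y \<and> nmul S a x = nmul S a y \<longrightarrow> x = y"
            using H e by simp
          have "nmul S [a] (if x \<in> Ids S then [] else [x]) = nmul S [a] (if y \<in> Ids S then [] else [y])"
            using mx my A by simp
          then show ?thesis using HH n by blast
        qed
        then have "x \<in> Ids S \<and> y \<in> Ids S \<or> x = y" by (auto split: if_splits)
        then show ?thesis
        proof
          assume "x \<in> Ids S \<and> y \<in> Ids S"
          then have "src S x = x" "src S y = y" unfolding Ids_def by auto
          then show ?thesis using ar(4,5) by simp
        qed
      qed
    qed
  next
    assume "left_cancellative S"
    then show "left_cancellative (Ncat S)" unfolding e using nmul_canc[OF S cS] by blast
  qed
qed


lemma Ncat_gcd: "is_left_gcd (Ncat S) a b c \<longleftrightarrow>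
   normal S c \<and> ndiv S c a \<and> ndiv S c b \<and> (\<forall>d. normal S d \<and> ndiv S d a \<and> ndiv S d b \<longrightarrow> ndiv S d c)"
  unfolding is_left_gcd_def Ncat_ldiv by blast

lemma common_div:
  assumes S: "category S" and cS: "conical S" and d: "normal S d"
    and p: "normal S (a # p')" and q: "normal S (b # q')"
    and dp: "ndiv S d (a # p')" and dq: "ndiv S d (b # q')"
  shows "d = [] \<or> (\<exists>c. d = [c] \<and> ldiv S c a \<and> ldiv S c b)
     \<or> (a = b \<and> (\<exists>d'. d = a # d' \<and> d' \<noteq> [] \<and> ndiv S d' p' \<and> ndiv S d' q'))"
proof -
  have A: "d = [] \<or> (\<exists>c. d = [c] \<and> ldiv S c a) \<or> (\<exists>d'. d = a # d' \<and> d' \<noteq> [] \<and> ndiv S d' p')"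
    using div_cons[OF S cS d p] dp by simp
  have B: "d = [] \<or> (\<exists>c. d = [c] \<and> ldiv S c b) \<or> (\<exists>d'. d = b # d' \<and> d' \<noteq> [] \<and> ndiv S d' q')"
    using div_cons[OF S cS d q] dq by simp
  show ?thesis using A B by auto
qed

lemma ngcd_exists:
  assumes S: "category S" and cS: "conical S"
    and G: "\<forall>a\<in>arr S. \<forall>b\<in>arr S. src S a = src S b \<longrightarrow> (\<exists>c. is_left_gcd S a b c)"
  shows "normal S p \<Longrightarrow> normal S q \<Longrightarrow> \<exists>g. normal S g \<and> ndiv S g p \<and> ndiv S g q
      \<and> (\<forall>d. normal S d \<and> ndiv S d p \<and> ndiv S d q \<longrightarrow> ndiv S d g)"
proof (induction p arbitrary: q)
  case Nil
  show ?case
  proof (intro exI conjI allI impI)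
    show "normal S []" "ndiv S [] []" "ndiv S [] q" using ndiv_Nil[of S "[]"] ndiv_Nil[of S q] Nil by auto
    fix d assume "normal S d \<and> ndiv S d [] \<and> ndiv S d q"
    then show "ndiv S d []" by simp
  qed
next
  case (Cons a p')
  have ap: "a \<in> arr S" "a \<notin> Ids S" "normal S p'" "p' \<noteq> [] \<longrightarrow> tgt S a \<noteq> src S (hd p')"
    using Cons.prems(1) by (auto simp: normal_Cons)
  show ?case
  proof (cases q)
    case Nil
    show ?thesis
    proof (intro exI conjI allI impI)
      show "normal S []" "ndiv S [] (a # p')" "ndiv S [] q" using ndiv_Nil[of S "a # p'"] ndiv_Nil[of S q] Nil Cons.prems by auto
      fix d assume "normal S d \<and> ndiv S d (a # p') \<and> ndiv S d q"
      then show "ndiv S d []" using Nil by simp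
    qed
  next
    case (Cons b q')
    have nq: "normal S (b # q')" using Cons \<open>normal S q\<close> by simp
    have bq: "b \<in> arr S" "b \<notin> Ids S" "normal S q'" "q' \<noteq> [] \<longrightarrow> tgt S b \<noteq> src S (hd q')"
      using nq by (auto simp: normal_Cons)
    show ?thesis
    proof (cases "a = b")
      case True
      obtain g' where g': "normal S g'" "ndiv S g' p'" "ndiv S g' q'"
        "\<forall>d. normal S d \<and> ndiv S d p' \<and> ndiv S d q' \<longrightarrow> ndiv S d g'"
        using Cons.IH[OF ap(3) bq(3)] by blast
      define g where "g = a # g'"
      have gn: "normal S g"
      proof (cases "g' = []")
        case True then show ?thesis using ap g_def by simp
      next
        case False
        have "p' \<noteq> [] \<and> src S (hd g') = src S (hd p')" using div_hd[OF S cS g'(1) False ap(3) g'(2)] .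
        then show ?thesis using ap g' False g_def by (simp add: normal_Cons)
      qed
      have gdiv: "ndiv S g (a # r)" if "normal S (a # r)" "ndiv S g' r" for r
      proof (cases "g' = []")
        case True
        then show ?thesis using div_cons[OF S cS gn that(1)] ldiv_refl[OF S ap(1)] g_def by simp
      next
        case False
        then show ?thesis using div_cons[OF S cS gn that(1)] that(2) g_def by simp
      qed
      show ?thesis
      proof (intro exI conjI allI impI)
        show "normal S g" by (rule gn)
        show "ndiv S g (a # p')" by (rule gdiv[OF Cons.prems(1) g'(2)])
        show "ndiv S g q" using gdiv[OF _ g'(3)] nq Cons True by simp
        fix d assume dd: "normal S d \<and> ndiv S d (a # p') \<and> ndiv S d q"
        have "d = [] \<or> (\<exists>c. d = [c] \<and> ldiv S c a \<and> ldiv S c b)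
          \<or> (a = b \<and> (\<exists>d'. d = a # d' \<and> d' \<noteq> [] \<and> ndiv S d' p' \<and> ndiv S d' q'))"
          using common_div[OF S cS _ Cons.prems(1) nq] dd Cons by simp
        then consider "d = []" | c where "d = [c]" "ldiv S c a"
          | d' where "d = a # d'" "d' \<noteq> []" "ndiv S d' p'" "ndiv S d' q'" by blast
        then show "ndiv S d g"
        proof cases
          case 1 then show ?thesis using ndiv_Nil[OF gn] by simp
        next
          case 2
          have "g = a # g'" by (rule g_def)
          then show ?thesis using div_cons[OF S cS _ ] gn 2 dd by (simp add: g_def)
        next
          case 3
          have nd': "normal S d'" using dd 3 by (simp add: normal_Cons)
          have "ndiv S d' g'" using g'(4) nd' 3 by blast
          moreover have "g' \<noteq> []" using calculation div_nil[OF S cS nd'] 3 by auto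
          ultimately show ?thesis using div_cons[OF S cS _ ] gn 3 dd by (simp add: g_def)
        qed
      qed
    next
      case False
      have common: "d = [] \<or> (\<exists>c. d = [c] \<and> ldiv S c a \<and> ldiv S c b)"
        if "normal S d" "ndiv S d (a # p')" "ndiv S d q" for d
        using common_div[OF S cS that(1) Cons.prems(1) nq] that Cons False by simp
      show ?thesis
      proof (cases "src S a = src S b")
        case True
        obtain c where c: "is_left_gcd S a b c" using G ap(1) bq(1) True by blast
        have cd: "ldiv S c a" "ldiv S c b" "\<And>d. ldiv S d a \<Longrightarrow> ldiv S d b \<Longrightarrow> ldiv S d c"
          using c unfolding is_left_gcd_def by blast+
        have ca: "c \<in> arr S" using ldiv_arr[OF cd(1)] .
        show ?thesis
        proof (cases "c \<in> Ids S")
          case True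
          show ?thesis
          proof (intro exI conjI allI impI)
            show "normal S []" "ndiv S [] (a # p')" "ndiv S [] q"
              using ndiv_Nil[of S "a # p'"] ndiv_Nil[of S q] Cons.prems(1) \<open>normal S q\<close> by auto
            fix d assume dd: "normal S d \<and> ndiv S d (a # p') \<and> ndiv S d q"
            have "d = []"
            proof (rule ccontr)
              assume "d \<noteq> []"
              then obtain c' where c': "d = [c']" "ldiv S c' a" "ldiv S c' b" using common dd by blast
              have "ldiv S c' c" using cd(3) c' by blast
              then obtain x where "defined S c' x" "c = comp S c' x" unfolding ldiv_def by blast
              then have "c' \<in> Ids S" using cS True unfolding conical_def by blast
              then show False using dd c' by simp
            qed
            then show "ndiv S d []" using ndiv_Nil[of S "[]"] by simp
          qed
        next
          case cN: False
          have gn: "normal S [c]" using ca cN by simp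
          show ?thesis
          proof (intro exI conjI allI impI)
            show "normal S [c]" by (rule gn)
            show "ndiv S [c] (a # p')" using div_cons[OF S cS gn Cons.prems(1)] cd by simp
            show "ndiv S [c] q" using div_cons[OF S cS gn nq] cd Cons by simp
            fix d assume dd: "normal S d \<and> ndiv S d (a # p') \<and> ndiv S d q"
            then consider "d = []" | c' where "d = [c']" "ldiv S c' a" "ldiv S c' b" using common by blast
            then show "ndiv S d [c]"
            proof cases
              case 1 then show ?thesis using ndiv_Nil[OF gn] by simp
            next
              case 2
              have "ldiv S c' c" using cd(3) 2 by blast
              then show ?thesis using div_cons[OF S cS _ gn] dd 2 by simp
            qed
          qed
        qed
      next
        case srcF: False
        show ?thesis
        proof (intro exI conjI allI impI)
          show "normal S []" "ndiv S [] (a # p')" "ndiv S [] q"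
            using ndiv_Nil[of S "a # p'"] ndiv_Nil[of S q] Cons.prems(1) \<open>normal S q\<close> by auto
          fix d assume dd: "normal S d \<and> ndiv S d (a # p') \<and> ndiv S d q"
          have "d = []"
          proof (rule ccontr)
            assume "d \<noteq> []"
            then obtain c' where c': "d = [c']" "ldiv S c' a" "ldiv S c' b" using common dd by blast
            then show False using ldiv_src[OF S c'(2)] ldiv_src[OF S c'(3)] srcF by simp
          qed
          then show "ndiv S d []" using ndiv_Nil[of S "[]"] by simp
        qed
      qed
    qed
  qed
qed


lemma ldiv_srcl: "category S \<Longrightarrow> a \<in> arr S \<Longrightarrow> ldiv S (src S a) a"
  unfolding ldiv_def defined_def using catD(1,4,7)[of S a] by metis

lemma ldiv_Ids: "category S \<Longrightarrow> conical S \<Longrightarrow> e \<in> Ids S \<Longrightarrow> ldiv S d e \<Longrightarrow> d = e"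
proof -
  assume S: "category S" and cS: "conical S" and e: "e \<in> Ids S" and d: "ldiv S d e"
  obtain x where x: "defined S d x" "e = comp S d x" using d unfolding ldiv_def by blast
  have "d \<in> Ids S" using cS x e unfolding conical_def by blast
  moreover have "src S e = src S d" using ldiv_src[OF S d] .
  ultimately show "d = e" using e unfolding Ids_def by simp
qed

lemma sgcd_exists:
  assumes S: "category S" and cS: "conical S"
    and G: "\<forall>p q. normal S p \<and> normal S q \<longrightarrow> (\<exists>g. normal S g \<and> ndiv S g p \<and> ndiv S g q
      \<and> (\<forall>d. normal S d \<and> ndiv S d p \<and> ndiv S d q \<longrightarrow> ndiv S d g))"
    and a: "a \<in> arr S" and b: "b \<in> arr S" and ab: "src S a = src S b"
  shows "\<exists>c. is_left_gcd S a b c"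
proof (cases "a \<in> Ids S")
  case True
  have "src S a = a" using True unfolding Ids_def by simp
  then have "is_left_gcd S a b a"
    unfolding is_left_gcd_def using ldiv_refl[OF S a] ldiv_srcl[OF S b] ab ldiv_Ids[OF S cS True] by metis
  then show ?thesis by blast
next
  case aN: False
  show ?thesis
  proof (cases "b \<in> Ids S")
    case True
    have "src S b = b" using True unfolding Ids_def by simp
    then have "is_left_gcd S a b b"
      unfolding is_left_gcd_def using ldiv_refl[OF S b] ldiv_srcl[OF S a] ab ldiv_Ids[OF S cS True] by metis
    then show ?thesis by blast
  next
    case bN: False
    have na: "normal S [a]" and nb: "normal S [b]" using a aN b bN by auto
    obtain g where g: "normal S g" "ndiv S g [a]" "ndiv S g [b]"
      "\<And>d. normal S d \<Longrightarrow> ndiv S d [a] \<Longrightarrow> ndiv S d [b] \<Longrightarrow> ndiv S d g"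
      using G na nb by blast
    have dsing: "ndiv S [d] [x] \<longleftrightarrow> ldiv S d x" if "normal S [d]" "normal S [x]" for d x
      using div_cons[OF S cS that(1) that(2)] by simp
    have idiv: "ldiv S d (src S a)" if "d \<in> Ids S" "ldiv S d a" for d
    proof -
      have "src S a = src S d" using ldiv_src[OF S that(2)] .
      also have "\<dots> = d" using that(1) unfolding Ids_def by simp
      finally show ?thesis using ldiv_refl[OF S] that(1) Ids_arr by metis
    qed
    have gcases: "g = [] \<or> (\<exists>c. g = [c] \<and> ldiv S c a)"
    proof -
      have "g = [] \<or> (\<exists>c. g = [c] \<and> ldiv S c a) \<or> (\<exists>d'. g = a # d' \<and> d' \<noteq> [] \<and> ndiv S d' [])"
        using div_cons[OF S cS g(1) na] g(2) by simp
      moreover have "\<not> (d' \<noteq> [] \<and> ndiv S d' [])" if "g = a # d'" for d'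
        using div_nil[OF S cS] g(1) that by (auto simp: normal_Cons)
      ultimately show ?thesis by blast
    qed
    then show ?thesis
    proof
      assume g0: "g = []"
      have "is_left_gcd S a b (src S a)"
        unfolding is_left_gcd_def
      proof (intro conjI allI impI)
        show "ldiv S (src S a) a" using ldiv_srcl[OF S a] .
        show "ldiv S (src S a) b" using ldiv_srcl[OF S b] ab by simp
        fix d assume dd: "ldiv S d a \<and> ldiv S d b"
        show "ldiv S d (src S a)"
        proof (cases "d \<in> Ids S")
          case True then show ?thesis using idiv dd by blast
        next
          case False
          have nd: "normal S [d]" using False ldiv_arr[of S d a] dd by simp
          have "ndiv S [d] []" using g(4)[OF nd] dsing[OF nd na] dsing[OF nd nb] dd g0 by simp
          then show ?thesis using div_nil[OF S cS nd] by simp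
        qed
      qed
      then show ?thesis by blast
    next
      assume "\<exists>c. g = [c] \<and> ldiv S c a"
      then obtain c where c: "g = [c]" "ldiv S c a" by blast
      have cb: "ldiv S c b" using dsing[OF _ nb, of c] g(1,3) c by simp
      have "is_left_gcd S a b c"
        unfolding is_left_gcd_def
      proof (intro conjI allI impI)
        show "ldiv S c a" "ldiv S c b" using c cb by auto
        fix d assume dd: "ldiv S d a \<and> ldiv S d b"
        show "ldiv S d c"
        proof (cases "d \<in> Ids S")
          case True
          have "src S a = src S c" using ldiv_src[OF S c(2)] .
          moreover have "src S a = d" using ldiv_src[OF S] dd True unfolding Ids_def by auto
          ultimately show ?thesis using ldiv_srcl[OF S ldiv_arr[OF c(2)]] by simp
        next
          case False
          have nd: "normal S [d]" using False ldiv_arr[of S d a] dd by simp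
          have "ndiv S [d] [c]" using g(4)[OF nd] dsing[OF nd na] dsing[OF nd nb] dd c(1) by simp
          then show ?thesis using dsing[OF nd] g(1) c(1) by simp
        qed
      qed
      then show ?thesis by blast
    qed
  qed
qed

lemma gcdex_Ncat:
  assumes S: "category S" and cS: "conical S"
  shows "(\<forall>a\<in>arr (Ncat S). \<forall>b\<in>arr (Ncat S). src (Ncat S) a = src (Ncat S) b \<longrightarrow> (\<exists>c. is_left_gcd (Ncat S) a b c))
    \<longleftrightarrow> (\<forall>a\<in>arr S. \<forall>b\<in>arr S. src S a = src S b \<longrightarrow> (\<exists>c. is_left_gcd S a b c))"
proof -
  have e: "(\<forall>a\<in>arr (Ncat S). \<forall>b\<in>arr (Ncat S). src (Ncat S) a = src (Ncat S) b \<longrightarrow> (\<exists>c. is_left_gcd (Ncat S) a b c))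
    \<longleftrightarrow> (\<forall>p q. normal S p \<and> normal S q \<longrightarrow> (\<exists>g. normal S g \<and> ndiv S g p \<and> ndiv S g q
      \<and> (\<forall>d. normal S d \<and> ndiv S d p \<and> ndiv S d q \<longrightarrow> ndiv S d g)))"
    unfolding Ncat_gcd Ncat_simps by (simp, blast)
  show ?thesis
  proof
    assume "\<forall>a\<in>arr (Ncat S). \<forall>b\<in>arr (Ncat S). src (Ncat S) a = src (Ncat S) b \<longrightarrow> (\<exists>c. is_left_gcd (Ncat S) a b c)"
    then have G: "\<forall>p q. normal S p \<and> normal S q \<longrightarrow> (\<exists>g. normal S g \<and> ndiv S g p \<and> ndiv S g q
      \<and> (\<forall>d. normal S d \<and> ndiv S d p \<and> ndiv S d q \<longrightarrow> ndiv S d g))" using e by blast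
    show "\<forall>a\<in>arr S. \<forall>b\<in>arr S. src S a = src S b \<longrightarrow> (\<exists>c. is_left_gcd S a b c)"
      using sgcd_exists[OF S cS G] by blast
  next
    assume G: "\<forall>a\<in>arr S. \<forall>b\<in>arr S. src S a = src S b \<longrightarrow> (\<exists>c. is_left_gcd S a b c)"
    have "\<forall>p q. normal S p \<and> normal S q \<longrightarrow> (\<exists>g. normal S g \<and> ndiv S g p \<and> ndiv S g q
      \<and> (\<forall>d. normal S d \<and> ndiv S d p \<and> ndiv S d q \<longrightarrow> ndiv S d g))"
      using ngcd_exists[OF S cS G] by blast
    then show "\<forall>a\<in>arr (Ncat S). \<forall>b\<in>arr (Ncat S). src (Ncat S) a = src (Ncat S) b \<longrightarrow> (\<exists>c. is_left_gcd (Ncat S) a b c)"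
      using e by blast
  qed
qed

lemma main_Ncat:
  assumes S: "category S"
  shows "left_gcd_cat (Ncat S) \<longleftrightarrow> left_gcd_cat S"
proof
  assume H: "left_gcd_cat (Ncat S)"
  have cS: "conical S" using H conical_Ncat[OF S] unfolding left_gcd_cat_def by simp
  show "left_gcd_cat S" using H unfolding left_gcd_cat_def conical_Ncat[OF S] lcanc_Ncat[OF S cS] gcdex_Ncat[OF S cS] .
next
  assume H: "left_gcd_cat S"
  have cS: "conical S" using H unfolding left_gcd_cat_def by simp
  show "left_gcd_cat (Ncat S)" using H unfolding left_gcd_cat_def conical_Ncat[OF S] lcanc_Ncat[OF S cS] gcdex_Ncat[OF S cS] .
qed

lemma left_Umon:
  assumes S: "category S"
  shows "left_gcd_cat (Umon S) \<longleftrightarrow> left_gcd_cat S"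
proof -
  interpret isoloc "umon_class S" "Ncat S" "Umon S"
    by unfold_locales (rule iso_Ncat[OF S], rule Ncat_closed[OF S])
  show ?thesis using left_gcd_iff main_Ncat[OF S] by simp
qed

theorem theorem5p9:
  fixes S :: "'a cat"
  assumes "category S"
  shows "(left_gcd_cat S \<longleftrightarrow> left_gcd_cat (Umon S))
       \<and> (right_gcd_cat S \<longleftrightarrow> right_gcd_cat (Umon S))
       \<and> (gcd_cat S \<longleftrightarrow> gcd_cat (Umon S))"
proof -
  note S = assms
  have L: "left_gcd_cat S \<longleftrightarrow> left_gcd_cat (Umon S)" using left_Umon[OF S] by simp
  have So: "category (op S)" by (rule category_op[OF S])
  have R1: "right_gcd_cat (Umon S) \<longleftrightarrow> left_gcd_cat (op (Umon S))"
    using left_op[OF category_Umon[OF S]] by simp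
  have R2: "left_gcd_cat (op (Umon S)) \<longleftrightarrow> left_gcd_cat (Umon (op S))"
  proof -
    interpret isoloc "\<lambda>X. rev ` X" "Umon (op S)" "op (Umon S)"
      by unfold_locales (rule iso_rev[OF S], rule category_closed[OF category_Umon[OF So]])
    show ?thesis by (rule left_gcd_iff)
  qed
  have R3: "left_gcd_cat (Umon (op S)) \<longleftrightarrow> left_gcd_cat (op S)" by (rule left_Umon[OF So])
  have R4: "left_gcd_cat (op S) \<longleftrightarrow> right_gcd_cat S" by (rule left_op[OF S])
  have R: "right_gcd_cat S \<longleftrightarrow> right_gcd_cat (Umon S)" using R1 R2 R3 R4 by simp
  show ?thesis using L R unfolding gcd_cat_def by simp
qed

end
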